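(* Let $n\in\mathbb N$ and let $\mathfrak S$ be as below. Then: (1) $\mathfrak S$ is a $\mathbb C$-algebra with respect to termwise addition and the multiplication given by the Leibniz rule, $\big(\sum_{\underline k}a_{\underline k}\underline\partial^{\underline k}\big)\cdot\big(\sum_{\underline l}b_{\underline l}\underline\partial^{\underline l}\big)=\sum_{\underline k,\underline l}\sum_{\underline 0\le\underline i\le\underline k}\binom{k_1}{i_1}\cdots\binom{k_n}{i_n}a_{\underline k}\frac{\partial^{|\underline i|}b_{\underline l}}{\partial x_1^{i_1}\cdots\partial x_n^{i_n}}\underline\partial^{\underline k+\underline l-\underline i}$ (which is well defined on $\mathfrak S$); in particular $\mathfrak S$ contains $\mathfrak D=\mathbb C[[x_1,\dots,x_n]][\partial_1,\dots,\partial_n]$ as a subalgebra; (2) the map $\sum_{\underline k}a_{\underline k}\underline\partial^{\underline k}\mapsto\sum_{\underline k}a_{\underline k}(0)\underline\partial^{\underline k}$ induces an isomorphism of $\mathbb C$-vector spaces $\mathfrak S/\mathfrak m\mathfrak S\to\mathbb C[\partial_1,\dots,\partial_n]$; (3) there is a natural injective algebra homomorphism $\mathfrak S\to\operatorname{End}^{\mathrm c}_{\mathbb C}(\widehat B)$ into the algebra of $\mathbb C$-linear endomorphisms of $\widehat B$ continuous in the $\mathfrak m$-adic topology; it makes $\widehat B$ a left $\mathfrak S$-module extending the natural left $\mathfrak D$-module structure.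
   Context: $\widehat B=\mathbb C[[x_1,\dots,x_n]]$, $\mathfrak m=(x_1,\dots,x_n)$, $\upsilon$ the $\mathfrak m$-adic valuation on $\widehat B$. Multi-indices $\underline k\in\mathbb N_0^n$, $\underline\partial^{\underline k}=\partial_1^{k_1}\cdots\partial_n^{k_n}$, $|\underline k|=k_1+\dots+k_n$. For a formal sum $P=\sum_{\underline k\ge\underline 0}a_{\underline k}\underline\partial^{\underline k}$ with $a_{\underline k}\in\widehat B$, its order is $o(P)=\sup\{|\underline k|-\upsilon(a_{\underline k})\}\in\mathbb Z\cup\{\infty\}$, and $\mathfrak S=\{P:o(P)<\infty\}$. *)

theory Defs
  imports "HOL-Algebra.Algebra" "HOL-Library.Extended_Real"
begin

text \<open>Multi-indices in N_0^n are functions 'n => nat for a finite index type 'n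
  (so n = CARD('n)).  An element of C[[x_1,...,x_n]] is given by its coefficient
  function; a formal operator sum_k a_k d^k is the function k |-> a_k.\<close>

type_synonym 'n mi = "'n \<Rightarrow> nat"
type_synonym 'n ps = "'n mi \<Rightarrow> complex"
type_synonym 'n dop = "'n mi \<Rightarrow> 'n ps"

definition mi_zero :: "'n mi" where "mi_zero = (\<lambda>_. 0)"

definition ps_zero :: "'n ps" where "ps_zero = (\<lambda>_. 0)"

definition deg :: "('n::finite) mi \<Rightarrow> nat" where
  "deg k = (\<Sum>j\<in>UNIV. k j)"

text \<open>m-adic valuation (infinity for 0)\<close>
definition mval :: "('n::finite) ps \<Rightarrow> enat" where
  "mval a = (INF \<alpha>\<in>{\<alpha>. a \<alpha> \<noteq> 0}. enat (deg \<alpha>))"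

definition op_order :: "('n::finite) dop \<Rightarrow> ereal" where
  "op_order P = (SUP k. ereal (real (deg k)) - ereal_of_enat (mval (P k)))"

definition S_set :: "('n::finite) dop set" where
  "S_set = {P. op_order P < \<infinity>}"

definition D_set :: "('n::finite) dop set" where
  "D_set = {P. finite {k. P k \<noteq> ps_zero}}"

definition ps_mult :: "('n::finite) ps \<Rightarrow> 'n ps \<Rightarrow> 'n ps" where
  "ps_mult a b = (\<lambda>\<alpha>. \<Sum>\<beta>\<in>{\<beta>. \<beta> \<le> \<alpha>}. a \<beta> * b (\<lambda>j. \<alpha> j - \<beta> j))"

definition ps_deriv :: "('n::finite) mi \<Rightarrow> 'n ps \<Rightarrow> 'n ps" where
  "ps_deriv i b = (\<lambda>\<alpha>. (\<Prod>j\<in>UNIV. pochhammer (of_nat (\<alpha> j + 1)) (i j)) * b (\<lambda>j. \<alpha> j + i j))"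

definition mbinom :: "('n::finite) mi \<Rightarrow> 'n mi \<Rightarrow> complex" where
  "mbinom k i = (\<Prod>j\<in>UNIV. of_nat (k j choose i j))"

text \<open>the x^alpha coefficient of the d^m coefficient contributed by the index triple (k,l,i)
  in the Leibniz product formula\<close>
definition leib_term :: "('n::finite) dop \<Rightarrow> 'n dop \<Rightarrow> 'n mi \<Rightarrow> 'n mi \<Rightarrow> 'n mi \<times> 'n mi \<times> 'n mi \<Rightarrow> complex" where
  "leib_term P Q m \<alpha> t = (case t of (k, l, i) \<Rightarrow>
     (if i \<le> k \<and> (\<lambda>j. k j + l j - i j) = m
      then mbinom k i * ps_mult (P k) (ps_deriv i (Q l)) \<alpha> else 0))"

text \<open>Leibniz product: sum of all (finitely many, on S) nonzero contributions\<close>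
definition op_mult :: "('n::finite) dop \<Rightarrow> 'n dop \<Rightarrow> 'n dop" where
  "op_mult P Q = (\<lambda>m \<alpha>. \<Sum>t\<in>{t. leib_term P Q m \<alpha> t \<noteq> 0}. leib_term P Q m \<alpha> t)"

definition op_add :: "('n::finite) dop \<Rightarrow> 'n dop \<Rightarrow> 'n dop" where
  "op_add P Q = (\<lambda>k \<alpha>. P k \<alpha> + Q k \<alpha>)"

definition op_smult :: "complex \<Rightarrow> ('n::finite) dop \<Rightarrow> 'n dop" where
  "op_smult c P = (\<lambda>k \<alpha>. c * P k \<alpha>)"

definition op_zero :: "('n::finite) dop" where
  "op_zero = (\<lambda>k \<alpha>. 0)"

definition coeff_op :: "('n::finite) ps \<Rightarrow> 'n dop" where
  "coeff_op f = (\<lambda>k. if k = mi_zero then f else ps_zero)"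

definition op_one :: "('n::finite) dop" where
  "op_one = coeff_op (\<lambda>\<alpha>. if \<alpha> = mi_zero then 1 else 0)"

definition CC :: "complex ring" where
  "CC = \<lparr>carrier = UNIV, monoid.mult = (*), monoid.one = 1, ring.zero = 0, ring.add = (+)\<rparr>"

definition S_ring :: "(complex, ('n::finite) dop) module" where
  "S_ring = \<lparr>carrier = S_set, monoid.mult = op_mult, monoid.one = op_one, ring.zero = op_zero,
             ring.add = op_add, module.smult = op_smult\<rparr>"

definition max_ideal :: "('n::finite) ps set" where
  "max_ideal = {f. f mi_zero = 0}"

definition mS_set :: "('n::finite) dop set" where
  "mS_set = {Q. \<exists>(N::nat) f P. (\<forall>t<N. f t \<in> max_ideal \<and> P t \<in> S_set) \<and>
               Q = (\<lambda>k \<alpha>. \<Sum>t<N. op_mult (coeff_op (f t)) (P t) k \<alpha>)}"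

definition poly_set :: "(('n::finite) mi \<Rightarrow> complex) set" where
  "poly_set = {c. finite {k. c k \<noteq> 0}}"

definition const_map :: "('n::finite) dop \<Rightarrow> ('n mi \<Rightarrow> complex)" where
  "const_map P = (\<lambda>k. P k mi_zero)"

definition app_term :: "('n::finite) dop \<Rightarrow> 'n ps \<Rightarrow> 'n mi \<Rightarrow> 'n mi \<Rightarrow> complex" where
  "app_term P b \<alpha> k = ps_mult (P k) (ps_deriv k b) \<alpha>"

definition op_apply :: "('n::finite) dop \<Rightarrow> 'n ps \<Rightarrow> 'n ps" where
  "op_apply P b = (\<lambda>\<alpha>. \<Sum>k\<in>{k. app_term P b \<alpha> k \<noteq> 0}. app_term P b \<alpha> k)"

definition D_action :: "('n::finite) dop \<Rightarrow> 'n ps \<Rightarrow> 'n ps" where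
  "D_action P b = (\<lambda>\<alpha>. \<Sum>k\<in>{k. P k \<noteq> ps_zero}. ps_mult (P k) (ps_deriv k b) \<alpha>)"

text \<open>C-linear and continuous for the m-adic topology
  (neighbourhood basis b + m^N = {c. v(c - b) >= N})\<close>
definition linear_endo :: "(('n::finite) ps \<Rightarrow> 'n ps) \<Rightarrow> bool" where
  "linear_endo T \<longleftrightarrow> (\<forall>b c. T (\<lambda>\<alpha>. b \<alpha> + c \<alpha>) = (\<lambda>\<alpha>. T b \<alpha> + T c \<alpha>)) \<and>
                     (\<forall>s b. T (\<lambda>\<alpha>. s * b \<alpha>) = (\<lambda>\<alpha>. s * T b \<alpha>))"

definition madic_continuous :: "(('n::finite) ps \<Rightarrow> 'n ps) \<Rightarrow> bool" where
  "madic_continuous T \<longleftrightarrow> (\<forall>b (N::nat). \<exists>(M::nat). \<forall>c.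
      mval (\<lambda>\<alpha>. c \<alpha> - b \<alpha>) \<ge> enat M \<longrightarrow> mval (\<lambda>\<alpha>. T c \<alpha> - T b \<alpha>) \<ge> enat N)"

end

theory Submission
  imports Defs "HOL-Library.Groups_Big_Fun" "HOL-Computational_Algebra.Formal_Power_Series"
begin

definition ffn :: "nat \<Rightarrow> nat \<Rightarrow> nat" where "ffn s i = (s choose i) * fact i"

lemma poch_ffn: "pochhammer (of_nat (e+1) :: complex) i = of_nat (ffn (e+i) i)"
proof (induction i)
  case 0 then show ?case by (simp add: ffn_def)
next
  case (Suc i)
  have "ffn (e + Suc i) (Suc i) = (Suc (e+i) choose Suc i) * Suc i * fact i"
    unfolding ffn_def by (simp only: add_Suc_right fact_Suc of_nat_id mult.assoc)
  also have "\<dots> = Suc (e+i) * ((e+i) choose i) * fact i"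
    by (metis Suc_times_binomial_eq)
  also have "\<dots> = ffn (e+i) i * (e + i + 1)" by (simp add: ffn_def algebra_simps)
  finally show ?case using Suc by (simp add: pochhammer_rec' algebra_simps)
qed

lemma ffn_split: "ffn t (l+r) = ffn t l * ffn (t-l) r"
proof (cases "l + r \<le> t")
  case True
  have "(t choose (l+r)) * ((l+r) choose l) = (t choose l) * ((t-l) choose r)"
    using choose_mult[of l "l+r" t] True by simp
  moreover have "((l+r) choose l) * fact l * fact r = fact (l+r)"
    using binomial_fact_lemma[of l "l+r"] by (simp add: algebra_simps)
  ultimately have "(t choose (l+r)) * fact (l+r) = (t choose l) * ((t-l) choose r) * fact l * fact r"
    by (metis mult.assoc)
  then show ?thesis by (simp add: ffn_def algebra_simps)
next
  case False
  then have A: "t choose (l+r) = 0" by simp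
  have B: "(t choose l) * ((t-l) choose r) = 0"
    using False by (cases "l \<le> t") auto
  have C: "(t choose l) * fact l * ((t-l choose r) * fact r) = ((t choose l) * ((t-l) choose r)) * (fact l * fact r)"
    by (simp only: mult_ac)
  show ?thesis unfolding ffn_def C A B by simp
qed

lemma vander_ffn: "(\<Sum>i\<le>k. (k choose i) * ffn s i * ffn g (k-i)) = ffn (s+g) k"
proof -
  have "(\<Sum>i\<le>k. (k choose i) * ffn s i * ffn g (k-i)) = (\<Sum>i\<le>k. fact k * ((s choose i) * (g choose (k-i))))"
  proof (rule sum.cong)
    fix i assume "i \<in> {..k}"
    then have "(k choose i) * fact i * fact (k-i) = fact k"
      using binomial_fact_lemma[of i k] by (simp add: algebra_simps)
    then show "(k choose i) * ffn s i * ffn g (k-i) = fact k * ((s choose i) * (g choose (k-i)))"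
      unfolding ffn_def
    proof -
      have "(k choose i) * ((s choose i) * fact i) * ((g choose (k-i)) * fact (k-i)) =
            ((k choose i) * fact i * fact (k-i)) * ((s choose i) * (g choose (k-i)))"
        by (simp only: mult_ac)
      then show "(k choose i) * ((s choose i) * fact i) * ((g choose (k-i)) * fact (k-i)) = fact k * ((s choose i) * (g choose (k-i)))"
        using \<open>(k choose i) * fact i * fact (k-i) = fact k\<close> by simp
    qed
  qed simp
  also have "\<dots> = fact k * (\<Sum>i\<le>k. (s choose i) * (g choose (k-i)))"
    by (simp add: sum_distrib_left)
  also have "(\<Sum>i\<le>k. (s choose i) * (g choose (k-i))) = (s+g) choose k"
    using binomial_Vandermonde[of s g k] by (simp add: atLeast0AtMost)
  finally show ?thesis by (simp add: ffn_def)
qed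

lemma leib_1d:
  assumes "l \<le> t"
  shows "(\<Sum>i\<le>k. (k choose i) * ffn s i * ffn t (k + l - i)) = ffn (s + t - l) k * ffn t l"
proof -
  have "(\<Sum>i\<le>k. (k choose i) * ffn s i * ffn t (k + l - i)) =
        (\<Sum>i\<le>k. ffn t l * ((k choose i) * ffn s i * ffn (t-l) (k - i)))"
  proof (rule sum.cong)
    fix i assume "i \<in> {..k}"
    then have "k + l - i = l + (k - i)" by auto
    then show "(k choose i) * ffn s i * ffn t (k + l - i) = ffn t l * ((k choose i) * ffn s i * ffn (t-l) (k - i))"
      by (simp add: ffn_split)
  qed simp
  also have "\<dots> = ffn t l * ffn (s + (t - l)) k" by (simp add: sum_distrib_left[symmetric] vander_ffn)
  finally show ?thesis using assms by simp
qed

definition FF :: "('n::finite) mi \<Rightarrow> 'n mi \<Rightarrow> complex" where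
  "FF g k = (\<Prod>j\<in>UNIV. of_nat (ffn (g j) (k j)))"

lemma poch_ffn': "pochhammer (1 + of_nat e :: complex) i = of_nat (ffn (e+i) i)"
  using poch_ffn[of e i] by (simp add: add.commute)

lemma deriv_FF: "ps_deriv i b = (\<lambda>\<alpha>. FF (\<lambda>j. \<alpha> j + i j) i * b (\<lambda>j. \<alpha> j + i j))"
  by (simp add: ps_deriv_def FF_def poch_ffn')

lemma le_PiE: "{i::('n::finite) mi. i \<le> k} = PiE UNIV (\<lambda>j. {..k j})"
  by (auto simp: le_fun_def PiE_def)

lemma finite_le: "finite {i::('n::finite) mi. i \<le> k}"
  by (simp add: le_PiE finite_PiE)

lemma leib_multi:
  fixes k l s t :: "('n::finite) mi"
  assumes "l \<le> t"
  shows "(\<Sum>i\<in>{i. i \<le> k}. mbinom k i * FF s i * FF t (\<lambda>j. k j + l j - i j))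
        = FF (\<lambda>j. s j + t j - l j) k * FF t l"
proof -
  have "(\<Sum>i\<in>{i. i \<le> k}. mbinom k i * FF s i * FF t (\<lambda>j. k j + l j - i j))
     = (\<Sum>i\<in>PiE UNIV (\<lambda>j. {..k j}). \<Prod>j\<in>UNIV. of_nat ((k j choose i j) * ffn (s j) (i j) * ffn (t j) (k j + l j - i j)))"
    unfolding le_PiE mbinom_def FF_def by (simp add: prod.distrib)
  also have "\<dots> = (\<Prod>j\<in>UNIV. \<Sum>i\<le>k j. of_nat ((k j choose i) * ffn (s j) i * ffn (t j) (k j + l j - i)))"
    by (rule prod_sum_PiE[symmetric]) auto
  also have "\<dots> = (\<Prod>j\<in>UNIV. of_nat (ffn (s j + t j - l j) (k j) * ffn (t j) (l j)))"
    by (rule prod.cong, simp, simp only: of_nat_sum[symmetric], rule arg_cong[where f=of_nat],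
        rule leib_1d, use assms in \<open>auto simp: le_fun_def\<close>)
  finally show ?thesis by (simp add: FF_def prod.distrib)
qed


abbreviation madd :: "('n::finite) mi \<Rightarrow> 'n mi \<Rightarrow> 'n mi" where
  "madd a b \<equiv> (\<lambda>j. a j + b j)"
abbreviation msub :: "('n::finite) mi \<Rightarrow> 'n mi \<Rightarrow> 'n mi" where
  "msub a b \<equiv> (\<lambda>j. a j - b j)"

lemma deg_madd: "deg (madd a b) = deg a + deg b"
  by (simp add: deg_def sum.distrib)

lemma deg_mono: "a \<le> b \<Longrightarrow> deg a \<le> deg b"
  unfolding deg_def le_fun_def by (simp add: sum_mono)

lemma deg_msub: "b \<le> a \<Longrightarrow> deg (msub a b) = deg a - deg b"
proof -
  assume "b \<le> a"
  then have "madd (msub a b) b = a" by (auto simp: le_fun_def fun_eq_iff)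
  then have "deg (msub a b) + deg b = deg a" by (metis deg_madd)
  then show ?thesis by simp
qed

lemma deg_zero[simp]: "deg (mi_zero :: ('n::finite) mi) = 0"
  by (simp add: deg_def mi_zero_def)

lemma deg_eq_0: "deg (a::('n::finite) mi) = 0 \<longleftrightarrow> a = mi_zero"
  by (simp add: deg_def mi_zero_def fun_eq_iff)

lemma comp_le_deg: "a j \<le> deg (a::('n::finite) mi)"
  unfolding deg_def by (rule member_le_sum) auto

lemma finite_deg: "finite {k::('n::finite) mi. deg k \<le> N}"
proof -
  have "{k::'n mi. deg k \<le> N} \<subseteq> PiE UNIV (\<lambda>_. {..N})"
    using comp_le_deg by (auto simp: PiE_def intro: le_trans)
  then show ?thesis by (rule finite_subset) (simp add: finite_PiE)
qed

lemma madd_le: "madd b c = a \<Longrightarrow> b \<le> a"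
  by (auto simp: le_fun_def)

lemma madd_le2: "madd b c = a \<Longrightarrow> c \<le> a"
  by (auto simp: le_fun_def)

definition bnd :: "nat \<Rightarrow> ('n::finite) dop \<Rightarrow> bool" where
  "bnd C P \<longleftrightarrow> (\<forall>k \<beta>. P k \<beta> \<noteq> 0 \<longrightarrow> deg k \<le> deg \<beta> + C)"

lemma mval_le: "a \<alpha> \<noteq> 0 \<Longrightarrow> mval a \<le> enat (deg \<alpha>)"
  unfolding mval_def by (rule INF_lower2[of \<alpha>]) auto

lemma mval_ge: "enat N \<le> mval a \<longleftrightarrow> (\<forall>\<alpha>. a \<alpha> \<noteq> 0 \<longrightarrow> N \<le> deg \<alpha>)"
  unfolding mval_def by (auto simp: le_INF_iff)

lemma mval_attained:
  assumes "a \<alpha> \<noteq> 0"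
  shows "\<exists>\<beta>. a \<beta> \<noteq> 0 \<and> mval a = enat (deg \<beta>)"
proof -
  let ?A = "(\<lambda>\<alpha>. enat (deg \<alpha>)) ` {\<alpha>. a \<alpha> \<noteq> 0}"
  have ne: "?A \<noteq> {}" using assms by auto
  have "Inf ?A \<in> ?A" unfolding Inf_enat_def using ne by (simp only: if_False) (rule LeastI_ex, blast)
  then show ?thesis unfolding mval_def by auto
qed

lemma mval_zero: "(\<forall>\<alpha>. a \<alpha> = 0) \<Longrightarrow> mval a = \<infinity>"
  unfolding mval_def by (simp add: top_enat_def)

lemma S_iff: "P \<in> S_set \<longleftrightarrow> (\<exists>C. bnd C P)"
proof
  assume "P \<in> S_set"
  then have lt: "op_order P < \<infinity>" by (simp add: S_set_def)
  define C where "C = nat (ceiling (real_of_ereal (max (op_order P) 0)))"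
  have "max (op_order P) 0 \<le> ereal (real C)"
  proof -
    have "max (op_order P) 0 \<noteq> \<infinity>" using lt by (auto simp: max_def)
    moreover have "max (op_order P) 0 \<noteq> -\<infinity>" by (auto simp: max_def)
    ultimately obtain r where r: "max (op_order P) 0 = ereal r" by (cases "max (op_order P) 0") auto
    then have "r \<le> real C" unfolding C_def by simp linarith
    then show ?thesis using r by simp
  qed
  then have oC: "op_order P \<le> ereal (real C)" using max.cobounded1 order.trans by blast
  have "bnd C P"
    unfolding bnd_def
  proof (intro allI impI)
    fix k \<beta> assume nz: "P k \<beta> \<noteq> 0"
    then obtain n where n: "mval (P k) = enat n" "n \<le> deg \<beta>"
      using mval_le[of "P k" \<beta>] by (cases "mval (P k)") auto
    have "ereal (real (deg k)) - ereal_of_enat (mval (P k)) \<le> op_order P"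
      unfolding op_order_def by (rule SUP_upper) simp
    then have "ereal (real (deg k)) - ereal (real n) \<le> ereal (real C)" using n oC by (metis ereal_of_enat_simps(1) order.trans)
    then have "real (deg k) - real n \<le> real C" by simp
    then show "deg k \<le> deg \<beta> + C" using n by linarith
  qed
  then show "\<exists>C. bnd C P" by blast
next
  assume "\<exists>C. bnd C P"
  then obtain C where C: "bnd C P" by blast
  have "op_order P \<le> ereal (real C)"
    unfolding op_order_def
  proof (rule SUP_least)
    fix k
    show "ereal (real (deg k)) - ereal_of_enat (mval (P k)) \<le> ereal (real C)"
    proof (cases "\<exists>\<alpha>. P k \<alpha> \<noteq> 0")
      case True
      then obtain \<alpha> where "P k \<alpha> \<noteq> 0" by blast
      then obtain \<beta> where b: "P k \<beta> \<noteq> 0" "mval (P k) = enat (deg \<beta>)" using mval_attained by blast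
      then have "deg k \<le> deg \<beta> + C" using C by (auto simp: bnd_def)
      then show ?thesis using b by simp
    next
      case False
      then show ?thesis by (simp add: mval_zero)
    qed
  qed
  then show "P \<in> S_set" by (auto simp: S_set_def)
qed

lemma bnd_mono: "bnd C P \<Longrightarrow> C \<le> D \<Longrightarrow> bnd D P"
  unfolding bnd_def by fastforce

lemma SA_flat:
  fixes g :: "'a \<Rightarrow> 'b \<Rightarrow> 'c::comm_monoid_add"
  assumes "finite {(a,b). g a b \<noteq> 0}"
  shows "Sum_any (\<lambda>a. Sum_any (g a)) = Sum_any (\<lambda>(a,b). g a b)"
proof (rule Sum_any.cartesian_product)
  let ?S = "{(a,b). g a b \<noteq> 0}"
  show "finite (fst ` ?S \<times> snd ` ?S)" using assms by simp
  show "{a. \<exists>b. g a b \<noteq> 0} \<times> {b. \<exists>a. g a b \<noteq> 0} \<subseteq> fst ` ?S \<times> snd ` ?S"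
    by (force simp: image_iff)
qed

lemma SA_group:
  fixes g :: "'a \<Rightarrow> 'c::comm_monoid_add"
  assumes fin: "finite {x. g x \<noteq> 0}"
  shows "Sum_any g = Sum_any (\<lambda>y. Sum_any (\<lambda>x. if p x = y then g x else 0))"
proof -
  let ?S = "{x. g x \<noteq> 0}"
  have inner: "Sum_any (\<lambda>x. if p x = y then g x else 0) = sum g {x\<in>?S. p x = y}" for y
  proof -
    have "Sum_any (\<lambda>x. if p x = y then g x else 0) = sum (\<lambda>x. if p x = y then g x else 0) ?S"
      by (rule Sum_any.expand_superset) (use fin in auto)
    also have "\<dots> = sum g {x\<in>?S. p x = y}" using fin by (simp only: sum.inter_filter)
    finally show ?thesis .
  qed
  have "Sum_any (\<lambda>y. Sum_any (\<lambda>x. if p x = y then g x else 0)) = sum (\<lambda>y. sum g {x\<in>?S. p x = y}) (p ` ?S)"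
    unfolding inner
    by (rule Sum_any.expand_superset) (use fin in \<open>auto elim: sum.not_neutral_contains_not_neutral\<close>)
  also have "\<dots> = sum g ?S"
    by (rule sum.group) (use fin in auto)
  also have "\<dots> = Sum_any g" by (simp add: Sum_any.expand_set)
  finally show ?thesis by simp
qed

lemma SA_inj:
  fixes g :: "'a \<Rightarrow> 'c::comm_monoid_add"
  assumes "inj f" and "{x. g x \<noteq> 0} \<subseteq> range f"
  shows "Sum_any g = Sum_any (g \<circ> f)"
proof -
  have "f ` {y. g (f y) \<noteq> 0} = {x. g x \<noteq> 0}" using assms(2) by auto
  then have "sum g {x. g x \<noteq> 0} = sum g (f ` {y. g (f y) \<noteq> 0})" by simp
  also have "\<dots> = sum (g \<circ> f) {y. g (f y) \<noteq> 0}"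
    by (rule sum.reindex) (use assms(1) in \<open>auto intro: inj_on_subset\<close>)
  finally show ?thesis by (simp add: Sum_any.expand_set)
qed

lemma SA_zero: "(\<And>x. g x = 0) \<Longrightarrow> Sum_any g = 0"
  by (simp add: Sum_any.expand_set)


abbreviation BB :: "nat \<Rightarrow> ('n::finite) mi set" where "BB N \<equiv> {k. deg k \<le> N}"

lemma madd_eq_iff: "madd b e = (a::('n::finite) mi) \<longleftrightarrow> (e = msub a b \<and> b \<le> a)"
proof
  assume h: "madd b e = a"
  have "\<And>x. b x + e x = a x" using h by metis
  then show "e = msub a b \<and> b \<le> a" unfolding fun_eq_iff le_fun_def
    by (metis add_diff_cancel_left' le_add1)
next
  assume "e = msub a b \<and> b \<le> a"
  then show "madd b e = a" by (auto simp: fun_eq_iff le_fun_def)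
qed

lemma ps_mult_SA: "ps_mult a c \<alpha> = Sum_any (\<lambda>(\<beta>,\<epsilon>). if madd \<beta> \<epsilon> = \<alpha> then a \<beta> * c \<epsilon> else 0)"
proof -
  have fin: "finite {(\<beta>,\<epsilon>). (if madd \<beta> \<epsilon> = \<alpha> then a \<beta> * c \<epsilon> else 0) \<noteq> 0}"
  proof (rule finite_subset)
    show "{(\<beta>,\<epsilon>). (if madd \<beta> \<epsilon> = \<alpha> then a \<beta> * c \<epsilon> else 0) \<noteq> 0} \<subseteq> {\<beta>. \<beta> \<le> \<alpha>} \<times> {\<epsilon>. \<epsilon> \<le> \<alpha>}"
      by (auto simp: le_fun_def split: if_splits)
    show "finite ({\<beta>. \<beta> \<le> \<alpha>} \<times> {\<epsilon>. \<epsilon> \<le> \<alpha>})" by (simp add: finite_le)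
  qed
  have inner: "Sum_any (\<lambda>\<epsilon>. if madd \<beta> \<epsilon> = \<alpha> then a \<beta> * c \<epsilon> else 0) =
      (if \<beta> \<in> {\<beta>. \<beta> \<le> \<alpha>} then a \<beta> * c (msub \<alpha> \<beta>) else 0)" for \<beta>
  proof -
    have e: "(\<lambda>\<epsilon>. if madd \<beta> \<epsilon> = \<alpha> then a \<beta> * c \<epsilon> else 0) =
          (\<lambda>\<epsilon>. if \<epsilon> = msub \<alpha> \<beta> then (if \<beta> \<le> \<alpha> then a \<beta> * c \<epsilon> else 0) else 0)"
      by (rule ext) (auto simp: madd_eq_iff)
    show ?thesis unfolding e by simp
  qed
  have "Sum_any (\<lambda>(\<beta>,\<epsilon>). if madd \<beta> \<epsilon> = \<alpha> then a \<beta> * c \<epsilon> else 0) =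
        Sum_any (\<lambda>\<beta>. Sum_any (\<lambda>\<epsilon>. if madd \<beta> \<epsilon> = \<alpha> then a \<beta> * c \<epsilon> else 0))"
    using SA_flat[OF fin] by simp
  also have "\<dots> = Sum_any (\<lambda>\<beta>. if \<beta> \<in> {\<beta>. \<beta> \<le> \<alpha>} then a \<beta> * c (msub \<alpha> \<beta>) else 0)"
    by (simp only: inner)
  also have "\<dots> = sum (\<lambda>\<beta>. a \<beta> * c (msub \<alpha> \<beta>)) {\<beta>. \<beta> \<le> \<alpha>}"
    by (rule Sum_any.conditionalize[symmetric]) (simp add: finite_le)
  finally show ?thesis by (simp add: ps_mult_def)
qed

definition gA :: "('n::finite) dop \<Rightarrow> 'n ps \<Rightarrow> 'n mi \<Rightarrow> 'n mi \<times> 'n mi \<times> 'n mi \<Rightarrow> complex" where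
  "gA P b \<alpha> t = (case t of (k,\<beta>,\<epsilon>) \<Rightarrow>
     if madd \<beta> \<epsilon> = \<alpha> then P k \<beta> * (FF (madd \<epsilon> k) k * b (madd \<epsilon> k)) else 0)"

lemma fin_pair: "finite {x. g x \<noteq> 0} \<Longrightarrow> finite {(a,b). g (a,b) \<noteq> 0}"
  by (simp add: case_prod_unfold)

lemma gA_nz: "gA P b \<alpha> (k,\<beta>,\<epsilon>) \<noteq> 0 \<Longrightarrow> madd \<beta> \<epsilon> = \<alpha> \<and> P k \<beta> \<noteq> 0"
  by (auto simp: gA_def split: if_splits)

lemma gA_fin:
  assumes "bnd C P"
  shows "finite {t. gA P b \<alpha> t \<noteq> 0}"
proof (rule finite_subset)
  let ?N = "deg \<alpha> + C"
  show "{t. gA P b \<alpha> t \<noteq> 0} \<subseteq> BB ?N \<times> BB ?N \<times> BB ?N"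
  proof (rule subsetI)
    fix t assume "t \<in> {t. gA P b \<alpha> t \<noteq> 0}"
    moreover obtain k \<beta> \<epsilon> where t: "t = (k,\<beta>,\<epsilon>)" by (metis prod.collapse)
    ultimately have "gA P b \<alpha> (k,\<beta>,\<epsilon>) \<noteq> 0" by simp
    then have h: "madd \<beta> \<epsilon> = \<alpha>" "P k \<beta> \<noteq> 0" using gA_nz by blast+
    then have "deg \<alpha> = deg \<beta> + deg \<epsilon>" using deg_madd by metis
    moreover have "deg k \<le> deg \<beta> + C" using assms h unfolding bnd_def by blast
    ultimately show "t \<in> BB ?N \<times> BB ?N \<times> BB ?N" by (simp add: t)
  qed
  show "finite (BB ?N \<times> BB ?N \<times> (BB ?N :: 'a mi set))" by (simp add: finite_deg)
qed

lemma app_SA: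
  assumes "bnd C P"
  shows "op_apply P b \<alpha> = Sum_any (gA P b \<alpha>)"
proof -
  have "op_apply P b \<alpha> = Sum_any (app_term P b \<alpha>)"
    by (simp add: op_apply_def Sum_any.expand_set)
  also have "app_term P b \<alpha> = (\<lambda>k. Sum_any (\<lambda>p. gA P b \<alpha> (k,p)))"
  proof (rule ext)
    fix k show "app_term P b \<alpha> k = Sum_any (\<lambda>p. gA P b \<alpha> (k,p))"
      unfolding app_term_def ps_mult_SA deriv_FF by (rule Sum_any.cong) (simp add: gA_def split: prod.split)
  qed
  also have "Sum_any (\<lambda>k. Sum_any (\<lambda>p. gA P b \<alpha> (k,p))) = Sum_any (\<lambda>(k,p). gA P b \<alpha> (k,p))"
    by (rule SA_flat, rule fin_pair[OF gA_fin[OF assms]])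
  finally show ?thesis by simp
qed

definition gM :: "('n::finite) dop \<Rightarrow> 'n dop \<Rightarrow> 'n mi \<Rightarrow> 'n mi \<Rightarrow> ('n mi \<times> 'n mi \<times> 'n mi) \<times> ('n mi \<times> 'n mi) \<Rightarrow> complex" where
  "gM P Q m \<alpha> t = (case t of ((k,l,i),(\<beta>,\<rho>)) \<Rightarrow>
     if i \<le> k \<and> (\<lambda>j. k j + l j - i j) = m \<and> madd \<beta> \<rho> = \<alpha>
     then mbinom k i * (P k \<beta> * (FF (madd \<rho> i) i * Q l (madd \<rho> i))) else 0)"

lemma gM_nz: "gM P Q m \<alpha> ((k,l,i),(\<beta>,\<rho>)) \<noteq> 0 \<Longrightarrow>
   i \<le> k \<and> (\<lambda>j. k j + l j - i j) = m \<and> madd \<beta> \<rho> = \<alpha> \<and> P k \<beta> \<noteq> 0 \<and> Q l (madd \<rho> i) \<noteq> 0"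
  by (auto simp: gM_def split: if_splits)

lemma leib_SA: "leib_term P Q m \<alpha> t = Sum_any (\<lambda>p. gM P Q m \<alpha> (t,p))"
proof -
  obtain k l i where t: "t = (k,l,i)" by (cases t) auto
  show ?thesis
  proof (cases "i \<le> k \<and> (\<lambda>j. k j + l j - i j) = m")
    case True
    have fin: "finite {p. (case p of (\<beta>, \<rho>) \<Rightarrow> if madd \<beta> \<rho> = \<alpha> then P k \<beta> * ps_deriv i (Q l) \<rho> else 0) \<noteq> 0}"
    proof (rule finite_subset)
      show "{p. (case p of (\<beta>, \<rho>) \<Rightarrow> if madd \<beta> \<rho> = \<alpha> then P k \<beta> * ps_deriv i (Q l) \<rho> else 0) \<noteq> 0}
           \<subseteq> {\<beta>. \<beta> \<le> \<alpha>} \<times> {\<epsilon>. \<epsilon> \<le> \<alpha>}"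
        by (auto simp: le_fun_def split: if_splits)
      show "finite ({\<beta>. \<beta> \<le> \<alpha>} \<times> {\<epsilon>. \<epsilon> \<le> \<alpha>})" by (simp add: finite_le)
    qed
    have "leib_term P Q m \<alpha> t = mbinom k i * ps_mult (P k) (ps_deriv i (Q l)) \<alpha>"
      using True by (simp add: t leib_term_def)
    also have "\<dots> = Sum_any (\<lambda>p. mbinom k i * (case p of (\<beta>, \<rho>) \<Rightarrow> if madd \<beta> \<rho> = \<alpha> then P k \<beta> * ps_deriv i (Q l) \<rho> else 0))"
      unfolding ps_mult_SA by (rule Sum_any_right_distrib[OF fin])
    also have "\<dots> = Sum_any (\<lambda>p. gM P Q m \<alpha> (t,p))"
      by (rule Sum_any.cong) (use True in \<open>simp add: t gM_def deriv_FF split: prod.split\<close>)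
    finally show ?thesis .
  next
    case False
    then have "\<And>p. gM P Q m \<alpha> (t,p) = 0" by (auto simp: t gM_def split: prod.split)
    then have "Sum_any (\<lambda>p. gM P Q m \<alpha> (t,p)) = 0" by (rule SA_zero)
    then show ?thesis using False by (auto simp: t leib_term_def)
  qed
qed

lemma gM_fin:
  assumes "bnd C1 P" "bnd C2 Q"
  shows "finite {t. gM P Q m \<alpha> t \<noteq> 0}"
proof (rule finite_subset)
  let ?N = "2 * deg \<alpha> + C1 + C2"
  show "{t. gM P Q m \<alpha> t \<noteq> 0} \<subseteq> (BB ?N \<times> BB ?N \<times> BB ?N) \<times> (BB ?N \<times> BB ?N)"
  proof (rule subsetI)
    fix t assume "t \<in> {t. gM P Q m \<alpha> t \<noteq> 0}"
    moreover obtain k l i \<beta> \<rho> where t: "t = ((k,l,i),(\<beta>,\<rho>))" by (metis prod.collapse)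
    ultimately have "gM P Q m \<alpha> ((k,l,i),(\<beta>,\<rho>)) \<noteq> 0" by simp
    then have h: "i \<le> k" "madd \<beta> \<rho> = \<alpha>" "P k \<beta> \<noteq> 0" "Q l (madd \<rho> i) \<noteq> 0" using gM_nz by blast+
    then have "deg \<alpha> = deg \<beta> + deg \<rho>" using deg_madd by metis
    moreover have "deg k \<le> deg \<beta> + C1" using assms h unfolding bnd_def by blast
    moreover have "deg l \<le> deg (madd \<rho> i) + C2" using assms h unfolding bnd_def by blast
    moreover have "deg i \<le> deg k" using h deg_mono by blast
    ultimately show "t \<in> (BB ?N \<times> BB ?N \<times> BB ?N) \<times> (BB ?N \<times> BB ?N)"
      by (simp add: deg_madd t)
  qed
  show "finite ((BB ?N \<times> BB ?N \<times> BB ?N) \<times> (BB ?N \<times> (BB ?N :: 'a mi set)))" by (simp add: finite_deg)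
qed

lemma leib_fin:
  assumes "bnd C1 P" "bnd C2 Q"
  shows "finite {t. leib_term P Q m \<alpha> t \<noteq> 0}"
proof (rule finite_subset)
  show "{t. leib_term P Q m \<alpha> t \<noteq> 0} \<subseteq> fst ` {t. gM P Q m \<alpha> t \<noteq> 0}"
  proof
    fix t assume "t \<in> {t. leib_term P Q m \<alpha> t \<noteq> 0}"
    then have "Sum_any (\<lambda>p. gM P Q m \<alpha> (t,p)) \<noteq> 0" by (simp add: leib_SA)
    then obtain p where "gM P Q m \<alpha> (t,p) \<noteq> 0" by (rule Sum_any.not_neutral_obtains_not_neutral)
    then show "t \<in> fst ` {t. gM P Q m \<alpha> t \<noteq> 0}" by force
  qed
  show "finite (fst ` {t. gM P Q m \<alpha> t \<noteq> 0})" using gM_fin[OF assms] by simp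
qed

lemma mult_SA:
  assumes "bnd C1 P" "bnd C2 Q"
  shows "op_mult P Q m \<alpha> = Sum_any (gM P Q m \<alpha>)"
proof -
  have "op_mult P Q m \<alpha> = Sum_any (leib_term P Q m \<alpha>)"
    by (simp add: op_mult_def Sum_any.expand_set)
  also have "\<dots> = Sum_any (\<lambda>t. Sum_any (\<lambda>p. gM P Q m \<alpha> (t,p)))" by (simp add: leib_SA)
  also have "\<dots> = Sum_any (\<lambda>(t,p). gM P Q m \<alpha> (t,p))"
    by (rule SA_flat, rule fin_pair[OF gM_fin[OF assms]])
  finally show ?thesis by simp
qed

lemma bnd_mult:
  assumes "bnd C1 P" "bnd C2 Q"
  shows "bnd (C1 + C2) (op_mult P Q)"
  unfolding bnd_def
proof (intro allI impI)
  fix m \<alpha> assume "op_mult P Q m \<alpha> \<noteq> 0"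
  then have "Sum_any (gM P Q m \<alpha>) \<noteq> 0" using mult_SA[OF assms] by simp
  then obtain t where "gM P Q m \<alpha> t \<noteq> 0" by (rule Sum_any.not_neutral_obtains_not_neutral)
  then obtain k l i \<beta> \<rho> where "gM P Q m \<alpha> ((k,l,i),(\<beta>,\<rho>)) \<noteq> 0" by (metis prod.collapse)
  then have h: "i \<le> k" "(\<lambda>j. k j + l j - i j) = m" "madd \<beta> \<rho> = \<alpha>" "P k \<beta> \<noteq> 0" "Q l (madd \<rho> i) \<noteq> 0"
    using gM_nz by blast+
  have "deg \<alpha> = deg \<beta> + deg \<rho>" using h deg_madd by metis
  moreover have "deg k \<le> deg \<beta> + C1" using assms h unfolding bnd_def by blast
  moreover have "deg l \<le> deg \<rho> + deg i + C2" using assms h unfolding bnd_def by (metis deg_madd)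
  moreover have "deg m + deg i = deg k + deg l"
  proof -
    have "madd m i = madd k l"
    proof (rule ext)
      fix x
      have "i x \<le> k x" using h(1) by (simp add: le_fun_def)
      moreover have "k x + l x - i x = m x" using h(2) by (metis (no_types))
      ultimately show "m x + i x = k x + l x" by linarith
    qed
    then show ?thesis by (metis deg_madd)
  qed
  ultimately show "deg m \<le> deg \<alpha> + (C1 + C2)" by linarith
qed


lemma gM_bounds:
  assumes "gM P Q m \<beta>0 ((k,l,i),(\<beta>,\<rho>)) \<noteq> 0" "bnd C1 P" "bnd C2 Q"
  shows "deg \<beta> + deg \<rho> = deg \<beta>0 \<and> deg k \<le> deg \<beta>0 + C1 \<and> deg i \<le> deg \<beta>0 + C1 \<and>
         deg l \<le> 2*deg \<beta>0 + C1 + C2 \<and> deg m \<le> 3 * deg \<beta>0 + 2*C1 + C2"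
proof -
  have h: "i \<le> k" "(\<lambda>j. k j + l j - i j) = m" "madd \<beta> \<rho> = \<beta>0" "P k \<beta> \<noteq> 0" "Q l (madd \<rho> i) \<noteq> 0"
    using gM_nz[OF assms(1)] by blast+
  have a: "deg \<beta>0 = deg \<beta> + deg \<rho>" using h deg_madd by metis
  have b: "deg k \<le> deg \<beta> + C1" using assms h unfolding bnd_def by blast
  have c: "deg l \<le> deg \<rho> + deg i + C2" using assms h unfolding bnd_def by (metis deg_madd)
  have d: "deg i \<le> deg k" using h deg_mono by blast
  have "madd m i = madd k l"
  proof (rule ext)
    fix x
    have "i x \<le> k x" using h(1) by (simp add: le_fun_def)
    moreover have "k x + l x - i x = m x" using h(2) by (metis (no_types))
    ultimately show "m x + i x = k x + l x" by linarith
  qed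
  then have e: "deg m + deg i = deg k + deg l" by (metis deg_madd)
  show ?thesis using a b c d e by linarith
qed

definition H1 :: "('n::finite) dop \<Rightarrow> 'n dop \<Rightarrow> 'n ps \<Rightarrow> 'n mi \<Rightarrow>
    ('n mi \<times> 'n mi \<times> 'n mi) \<times> (('n mi \<times> 'n mi \<times> 'n mi) \<times> ('n mi \<times> 'n mi)) \<Rightarrow> complex" where
  "H1 P Q b \<alpha> x = (case x of ((m,\<beta>0,\<epsilon>0),u) \<Rightarrow>
     if madd \<beta>0 \<epsilon>0 = \<alpha> then gM P Q m \<beta>0 u * (FF (madd \<epsilon>0 m) m * b (madd \<epsilon>0 m)) else 0)"

lemma H1_fin:
  assumes "bnd C1 P" "bnd C2 Q"
  shows "finite {x. H1 P Q b \<alpha> x \<noteq> 0}"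
proof (rule finite_subset)
  let ?N = "3 * deg \<alpha> + 2*C1 + 2*C2"
  let ?B = "BB ?N :: 'a mi set"
  show "{x. H1 P Q b \<alpha> x \<noteq> 0} \<subseteq> (?B \<times> ?B \<times> ?B) \<times> ((?B \<times> ?B \<times> ?B) \<times> (?B \<times> ?B))"
  proof (rule subsetI)
    fix x assume "x \<in> {x. H1 P Q b \<alpha> x \<noteq> 0}"
    moreover obtain m \<beta>0 \<epsilon>0 k l i \<beta> \<rho> where x: "x = ((m,\<beta>0,\<epsilon>0),((k,l,i),(\<beta>,\<rho>)))" by (metis prod.collapse)
    ultimately have nz: "H1 P Q b \<alpha> ((m,\<beta>0,\<epsilon>0),((k,l,i),(\<beta>,\<rho>))) \<noteq> 0" by simp
    then have e: "madd \<beta>0 \<epsilon>0 = \<alpha>" and g: "gM P Q m \<beta>0 ((k,l,i),(\<beta>,\<rho>)) \<noteq> 0"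
      by (auto simp: H1_def split: if_splits)
    have "deg \<alpha> = deg \<beta>0 + deg \<epsilon>0" using e deg_madd by metis
    then show "x \<in> (?B \<times> ?B \<times> ?B) \<times> ((?B \<times> ?B \<times> ?B) \<times> (?B \<times> ?B))"
      using gM_bounds[OF g assms] by (simp add: x)
  qed
  show "finite ((?B \<times> ?B \<times> ?B) \<times> ((?B \<times> ?B \<times> ?B) \<times> (?B \<times> ?B)))" by (simp add: finite_deg)
qed

lemma madd_msub_eq: "madd (msub a b) b = (a::('n::finite) mi) \<longleftrightarrow> b \<le> a"
  by (auto simp: fun_eq_iff le_fun_def) (metis le_add2)

lemma E_iff:
  fixes i \<sigma> m \<tau> k l \<beta> \<alpha> :: "('n::finite) mi"
  assumes "i \<le> \<sigma>" "m \<le> \<tau>" "madd m i = madd k l"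
  shows "madd (madd \<beta> (msub \<sigma> i)) (msub \<tau> m) = \<alpha> \<longleftrightarrow> madd \<beta> (madd \<sigma> \<tau>) = madd \<alpha> (madd k l)"
proof -
  have h: "i x \<le> \<sigma> x" "m x \<le> \<tau> x" "m x + i x = k x + l x" for x
    using assms by (auto simp: le_fun_def dest: fun_cong[where x=x])
  have "(\<beta> x + (\<sigma> x - i x) + (\<tau> x - m x) = \<alpha> x) \<longleftrightarrow> (\<beta> x + (\<sigma> x + \<tau> x) = \<alpha> x + (k x + l x))" for x
    using h[of x] by linarith
  then show ?thesis by (simp add: fun_eq_iff)
qed

definition piL :: "('n mi \<times> 'n mi \<times> 'n mi) \<times> (('n mi \<times> 'n mi \<times> 'n mi) \<times> ('n mi \<times> 'n mi)) \<Rightarrow>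
    ('n::finite) mi \<times> 'n mi \<times> 'n mi \<times> 'n mi \<times> 'n mi" where
  "piL x = (case x of ((m,\<beta>0,\<epsilon>0),((k,l,i),(\<beta>,\<rho>))) \<Rightarrow> (k,\<beta>,l,madd \<rho> i, madd \<epsilon>0 m))"

definition IL :: "('n::finite) dop \<Rightarrow> 'n dop \<Rightarrow> 'n ps \<Rightarrow> 'n mi \<Rightarrow> 'n mi \<times> 'n mi \<times> 'n mi \<times> 'n mi \<times> 'n mi \<Rightarrow> complex" where
  "IL P Q b \<alpha> y = (case y of (k,\<beta>,l,\<sigma>,\<tau>) \<Rightarrow>
     \<Sum>i\<in>{i. i \<le> k}. if madd \<beta> (madd \<sigma> \<tau>) = madd \<alpha> (madd k l) \<and> i \<le> \<sigma> \<and> msub (madd k l) i \<le> \<tau>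
        then mbinom k i * (P k \<beta> * (FF \<sigma> i * Q l \<sigma>)) * (FF \<tau> (msub (madd k l) i) * b \<tau>) else 0)"

lemma inner_L:
  "Sum_any (\<lambda>x. if piL x = (k,\<beta>,l,\<sigma>,\<tau>) then H1 P Q b \<alpha> x else 0) = IL P Q b \<alpha> (k,\<beta>,l,\<sigma>,\<tau>)"
proof -
  define f where "f = (\<lambda>x. if piL x = (k,\<beta>,l,\<sigma>,\<tau>) then H1 P Q b \<alpha> x else 0)"
  define \<phi> where "\<phi> = (\<lambda>i. ((msub (madd k l) i, madd \<beta> (msub \<sigma> i), msub \<tau> (msub (madd k l) i)),
                         ((k,l,i),(\<beta>, msub \<sigma> i))))"
  have inj: "inj \<phi>" unfolding \<phi>_def by (rule injI) simp
  have rng: "{x. f x \<noteq> 0} \<subseteq> range \<phi>"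
  proof (rule subsetI)
    fix x assume "x \<in> {x. f x \<noteq> 0}"
    moreover obtain m \<beta>0 \<epsilon>0 k' l' i \<beta>' \<rho> where x: "x = ((m,\<beta>0,\<epsilon>0),((k',l',i),(\<beta>',\<rho>)))" by (metis prod.collapse)
    ultimately have nz: "f ((m,\<beta>0,\<epsilon>0),((k',l',i),(\<beta>',\<rho>))) \<noteq> 0" by simp
    then have p: "k' = k" "\<beta>' = \<beta>" "l' = l" "madd \<rho> i = \<sigma>" "madd \<epsilon>0 m = \<tau>"
      by (auto simp: f_def piL_def split: if_splits)
    from nz have "gM P Q m \<beta>0 ((k',l',i),(\<beta>',\<rho>)) \<noteq> 0"
      by (auto simp: f_def H1_def split: if_splits)
    from gM_nz[OF this] have q: "msub (madd k l) i = m" "madd \<beta> \<rho> = \<beta>0" using p by auto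
    have "\<rho> = msub \<sigma> i"
    proof (rule ext) fix x show "\<rho> x = \<sigma> x - i x" using fun_cong[OF p(4), of x] by simp qed
    moreover have "\<epsilon>0 = msub \<tau> m"
    proof (rule ext) fix x show "\<epsilon>0 x = \<tau> x - m x" using fun_cong[OF p(5), of x] by simp qed
    moreover have meq: "m = msub (madd k l) i" using q(1) by simp
    ultimately have "x = \<phi> i" unfolding \<phi>_def x using p q(2) by simp
    then show "x \<in> range \<phi>" by simp
  qed
  have "Sum_any f = Sum_any (f \<circ> \<phi>)" by (rule SA_inj[OF inj rng])
  also have "\<dots> = sum (f \<circ> \<phi>) {i. i \<le> k}"
  proof (rule Sum_any.expand_superset)
    show "finite {i. i \<le> k}" by (rule finite_le)
    show "{a. (f \<circ> \<phi>) a \<noteq> 0} \<subseteq> {i. i \<le> k}"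
      by (auto simp: f_def \<phi>_def H1_def gM_def split: if_splits)
  qed
  also have "\<dots> = IL P Q b \<alpha> (k,\<beta>,l,\<sigma>,\<tau>)"
    unfolding IL_def
  proof (simp only: prod.case, rule sum.cong[OF refl])
    fix i assume "i \<in> {i. i \<le> k}"
    then have ik: "i \<le> k" by simp
    let ?m = "msub (madd k l) i"
    have mi: "madd ?m i = madd k l"
    proof (rule ext) fix x show "k x + l x - i x + i x = k x + l x" using le_funD[OF ik, of x] by simp qed
    show "(f \<circ> \<phi>) i = (if madd \<beta> (madd \<sigma> \<tau>) = madd \<alpha> (madd k l) \<and> i \<le> \<sigma> \<and> ?m \<le> \<tau>
        then mbinom k i * (P k \<beta> * (FF \<sigma> i * Q l \<sigma>)) * (FF \<tau> ?m * b \<tau>) else 0)"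
    proof (cases "i \<le> \<sigma> \<and> ?m \<le> \<tau>")
      case True
      have s1: "madd (msub \<sigma> i) i = \<sigma>" using True madd_msub_eq by blast
      have s2: "madd (msub \<tau> ?m) ?m = \<tau>"
        by (rule madd_msub_eq[where b="?m", THEN iffD2]) (use True in blast)
      have E: "madd (madd \<beta> (msub \<sigma> i)) (msub \<tau> ?m) = \<alpha> \<longleftrightarrow> madd \<beta> (madd \<sigma> \<tau>) = madd \<alpha> (madd k l)"
        using E_iff[OF conjunct1[OF True] conjunct2[OF True] mi] .
      show ?thesis
        unfolding comp_def f_def \<phi>_def piL_def H1_def gM_def
        by (simp only: prod.case s1 s2 E True ik simp_thms if_True refl)
    next
      case False
      then have "piL (\<phi> i) \<noteq> (k,\<beta>,l,\<sigma>,\<tau>)"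
        unfolding \<phi>_def piL_def using madd_msub_eq by auto
      then show ?thesis using False by (auto simp: f_def)
    qed
  qed
  finally show ?thesis by (simp add: f_def)
qed


lemma LHS_SA:
  assumes P: "bnd C1 P" and Q: "bnd C2 Q"
  shows "op_apply (op_mult P Q) b \<alpha> = Sum_any (IL P Q b \<alpha>)"
proof -
  have R: "bnd (C1+C2) (op_mult P Q)" by (rule bnd_mult[OF P Q])
  have g: "gA (op_mult P Q) b \<alpha> s = Sum_any (\<lambda>u. H1 P Q b \<alpha> (s,u))" for s
  proof -
    obtain m \<beta>0 \<epsilon>0 where s: "s = (m,\<beta>0,\<epsilon>0)" by (metis prod.collapse)
    show ?thesis
    proof (cases "madd \<beta>0 \<epsilon>0 = \<alpha>")
      case True
      have "gA (op_mult P Q) b \<alpha> s = op_mult P Q m \<beta>0 * (FF (madd \<epsilon>0 m) m * b (madd \<epsilon>0 m))"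
        using True by (simp add: s gA_def)
      also have "\<dots> = Sum_any (gM P Q m \<beta>0) * (FF (madd \<epsilon>0 m) m * b (madd \<epsilon>0 m))"
        by (simp add: mult_SA[OF P Q])
      also have "\<dots> = Sum_any (\<lambda>u. gM P Q m \<beta>0 u * (FF (madd \<epsilon>0 m) m * b (madd \<epsilon>0 m)))"
        by (rule Sum_any_left_distrib[OF gM_fin[OF P Q]])
      also have "\<dots> = Sum_any (\<lambda>u. H1 P Q b \<alpha> (s,u))"
        using True by (simp add: s H1_def)
      finally show ?thesis .
    next
      case False
      then show ?thesis by (simp add: s gA_def H1_def)
    qed
  qed
  have "op_apply (op_mult P Q) b \<alpha> = Sum_any (gA (op_mult P Q) b \<alpha>)" by (rule app_SA[OF R])
  also have "\<dots> = Sum_any (\<lambda>s. Sum_any (\<lambda>u. H1 P Q b \<alpha> (s,u)))" by (rule arg_cong[where f=Sum_any], rule ext, rule g)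
  also have "\<dots> = Sum_any (\<lambda>(s,u). H1 P Q b \<alpha> (s,u))"
    by (rule SA_flat, rule fin_pair[OF H1_fin[OF P Q]])
  also have "\<dots> = Sum_any (H1 P Q b \<alpha>)" by (simp add: case_prod_unfold)
  also have "\<dots> = Sum_any (\<lambda>y. Sum_any (\<lambda>x. if piL x = y then H1 P Q b \<alpha> x else 0))"
    by (rule SA_group[OF H1_fin[OF P Q]])
  also have "\<dots> = Sum_any (IL P Q b \<alpha>)"
    by (rule Sum_any.cong, case_tac a rule: prod_cases5, simp only: inner_L)
  finally show ?thesis .
qed

definition H2 :: "('n::finite) dop \<Rightarrow> 'n dop \<Rightarrow> 'n ps \<Rightarrow> 'n mi \<Rightarrow>
    ('n mi \<times> 'n mi \<times> 'n mi) \<times> ('n mi \<times> 'n mi \<times> 'n mi) \<Rightarrow> complex" where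
  "H2 P Q b \<alpha> x = (case x of ((k,\<beta>,\<epsilon>),u) \<Rightarrow>
     if madd \<beta> \<epsilon> = \<alpha> then (P k \<beta> * FF (madd \<epsilon> k) k) * gA Q b (madd \<epsilon> k) u else 0)"

lemma H2_fin:
  assumes "bnd C1 P" "bnd C2 Q"
  shows "finite {x. H2 P Q b \<alpha> x \<noteq> 0}"
proof (rule finite_subset)
  let ?N = "2 * deg \<alpha> + C1 + C2"
  let ?B = "BB ?N :: 'a mi set"
  show "{x. H2 P Q b \<alpha> x \<noteq> 0} \<subseteq> (?B \<times> ?B \<times> ?B) \<times> (?B \<times> ?B \<times> ?B)"
  proof (rule subsetI)
    fix x assume "x \<in> {x. H2 P Q b \<alpha> x \<noteq> 0}"
    moreover obtain k \<beta> \<epsilon> l \<beta>' \<epsilon>' where x: "x = ((k,\<beta>,\<epsilon>),(l,\<beta>',\<epsilon>'))" by (metis prod.collapse)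
    ultimately have nz: "H2 P Q b \<alpha> ((k,\<beta>,\<epsilon>),(l,\<beta>',\<epsilon>')) \<noteq> 0" by simp
    then have e: "madd \<beta> \<epsilon> = \<alpha>" "P k \<beta> \<noteq> 0" and g: "gA Q b (madd \<epsilon> k) (l,\<beta>',\<epsilon>') \<noteq> 0"
      by (auto simp: H2_def split: if_splits)
    from gA_nz[OF g] have g2: "madd \<beta>' \<epsilon>' = madd \<epsilon> k" "Q l \<beta>' \<noteq> 0" by auto
    have "deg \<alpha> = deg \<beta> + deg \<epsilon>" using e deg_madd by metis
    moreover have "deg \<beta>' + deg \<epsilon>' = deg \<epsilon> + deg k" using g2 deg_madd by metis
    moreover have "deg k \<le> deg \<beta> + C1" using assms e unfolding bnd_def by blast
    moreover have "deg l \<le> deg \<beta>' + C2" using assms g2 unfolding bnd_def by blast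
    ultimately show "x \<in> (?B \<times> ?B \<times> ?B) \<times> (?B \<times> ?B \<times> ?B)"
      by (simp add: x)
  qed
  show "finite ((?B \<times> ?B \<times> ?B) \<times> (?B \<times> ?B \<times> ?B))" by (simp add: finite_deg)
qed

definition piR :: "('n mi \<times> 'n mi \<times> 'n mi) \<times> ('n mi \<times> 'n mi \<times> 'n mi) \<Rightarrow>
    ('n::finite) mi \<times> 'n mi \<times> 'n mi \<times> 'n mi \<times> 'n mi" where
  "piR x = (case x of ((k,\<beta>,\<epsilon>),(l,\<beta>',\<epsilon>')) \<Rightarrow> (k,\<beta>,l,\<beta>',madd \<epsilon>' l))"

definition IR :: "('n::finite) dop \<Rightarrow> 'n dop \<Rightarrow> 'n ps \<Rightarrow> 'n mi \<Rightarrow> 'n mi \<times> 'n mi \<times> 'n mi \<times> 'n mi \<times> 'n mi \<Rightarrow> complex" where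
  "IR P Q b \<alpha> y = (case y of (k,\<beta>,l,\<sigma>,\<tau>) \<Rightarrow>
     if \<beta> \<le> \<alpha> \<and> l \<le> \<tau> \<and> madd \<sigma> (msub \<tau> l) = madd (msub \<alpha> \<beta>) k
     then (P k \<beta> * FF (madd (msub \<alpha> \<beta>) k) k) * (Q l \<sigma> * (FF \<tau> l * b \<tau>)) else 0)"

lemma SA_unit: "Sum_any (g :: unit \<Rightarrow> 'a::comm_monoid_add) = g ()"
proof -
  have "Sum_any g = sum g UNIV" by (rule Sum_any.expand_superset) auto
  also have "UNIV = {()}" by auto
  finally show ?thesis by simp
qed

lemma madd_msub_eq2: "madd b (msub a b) = (a::('n::finite) mi) \<longleftrightarrow> b \<le> a"
  by (auto simp: fun_eq_iff le_fun_def) (metis le_add1)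

lemma inner_R:
  "Sum_any (\<lambda>x. if piR x = (k,\<beta>,l,\<sigma>,\<tau>) then H2 P Q b \<alpha> x else 0) = IR P Q b \<alpha> (k,\<beta>,l,\<sigma>,\<tau>)"
proof -
  define f where "f = (\<lambda>x. if piR x = (k,\<beta>,l,\<sigma>,\<tau>) then H2 P Q b \<alpha> x else 0)"
  define \<phi> where "\<phi> = (\<lambda>u::unit. ((k,\<beta>,msub \<alpha> \<beta>),(l,\<sigma>,msub \<tau> l)))"
  have inj: "inj \<phi>" by (rule injI) simp
  have rng: "{x. f x \<noteq> 0} \<subseteq> range \<phi>"
  proof (rule subsetI)
    fix x assume "x \<in> {x. f x \<noteq> 0}"
    moreover obtain k' \<beta>' \<epsilon> l' \<beta>'' \<epsilon>' where x: "x = ((k',\<beta>',\<epsilon>),(l',\<beta>'',\<epsilon>'))" by (metis prod.collapse)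
    ultimately have nz: "f ((k',\<beta>',\<epsilon>),(l',\<beta>'',\<epsilon>')) \<noteq> 0" by simp
    then have p: "k' = k" "\<beta>' = \<beta>" "l' = l" "\<beta>'' = \<sigma>" "madd \<epsilon>' l = \<tau>"
      by (auto simp: f_def piR_def split: if_splits)
    from nz have q: "madd \<beta> \<epsilon> = \<alpha>"
      using p by (auto simp: f_def H2_def split: if_splits)
    have "\<epsilon>' = msub \<tau> l"
    proof (rule ext) fix x show "\<epsilon>' x = \<tau> x - l x" using fun_cong[OF p(5), of x] by simp qed
    moreover have "\<epsilon> = msub \<alpha> \<beta>"
    proof (rule ext) fix x show "\<epsilon> x = \<alpha> x - \<beta> x" using fun_cong[OF q, of x] by simp qed
    ultimately have "x = \<phi> ()" unfolding \<phi>_def x using p by simp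
    then show "x \<in> range \<phi>" by simp
  qed
  have "Sum_any f = Sum_any (f \<circ> \<phi>)" by (rule SA_inj[OF inj rng])
  also have "\<dots> = f (\<phi> ())" by (simp add: SA_unit)
  also have "\<dots> = IR P Q b \<alpha> (k,\<beta>,l,\<sigma>,\<tau>)"
  proof (cases "\<beta> \<le> \<alpha> \<and> l \<le> \<tau>")
    case True
    then have s1: "madd \<beta> (msub \<alpha> \<beta>) = \<alpha>" and s2: "madd (msub \<tau> l) l = \<tau>"
      using madd_msub_eq2 madd_msub_eq by blast+
    show ?thesis
      unfolding f_def \<phi>_def piR_def H2_def IR_def gA_def
      by (simp only: prod.case s1 s2 True simp_thms if_True refl) (simp add: mult.assoc)
  next
    case False
    show ?thesis
    proof (cases "l \<le> \<tau>")
      case False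
      then have "piR (\<phi> ()) \<noteq> (k,\<beta>,l,\<sigma>,\<tau>)"
        unfolding \<phi>_def piR_def using madd_msub_eq by auto
      then show ?thesis using False by (auto simp: f_def IR_def)
    next
      case True
      then have "\<not> \<beta> \<le> \<alpha>" using False by blast
      then have "madd \<beta> (msub \<alpha> \<beta>) \<noteq> \<alpha>" using madd_msub_eq2 by blast
      then show ?thesis using \<open>\<not> \<beta> \<le> \<alpha>\<close> by (auto simp: f_def IR_def H2_def \<phi>_def)
    qed
  qed
  finally show ?thesis by (simp add: f_def)
qed

lemma RHS_SA:
  assumes P: "bnd C1 P" and Q: "bnd C2 Q"
  shows "op_apply P (op_apply Q b) \<alpha> = Sum_any (IR P Q b \<alpha>)"
proof -
  have g: "gA P (op_apply Q b) \<alpha> s = Sum_any (\<lambda>u. H2 P Q b \<alpha> (s,u))" for s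
  proof -
    obtain k \<beta> \<epsilon> where s: "s = (k,\<beta>,\<epsilon>)" by (metis prod.collapse)
    show ?thesis
    proof (cases "madd \<beta> \<epsilon> = \<alpha>")
      case True
      have "gA P (op_apply Q b) \<alpha> s = (P k \<beta> * FF (madd \<epsilon> k) k) * op_apply Q b (madd \<epsilon> k)"
        using True by (simp add: s gA_def mult.assoc)
      also have "\<dots> = (P k \<beta> * FF (madd \<epsilon> k) k) * Sum_any (gA Q b (madd \<epsilon> k))"
        by (simp add: app_SA[OF Q])
      also have "\<dots> = Sum_any (\<lambda>u. (P k \<beta> * FF (madd \<epsilon> k) k) * gA Q b (madd \<epsilon> k) u)"
        by (rule Sum_any_right_distrib[OF gA_fin[OF Q]])
      also have "\<dots> = Sum_any (\<lambda>u. H2 P Q b \<alpha> (s,u))"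
        using True by (simp add: s H2_def)
      finally show ?thesis .
    next
      case False
      then show ?thesis by (simp add: s gA_def H2_def)
    qed
  qed
  have "op_apply P (op_apply Q b) \<alpha> = Sum_any (gA P (op_apply Q b) \<alpha>)" by (rule app_SA[OF P])
  also have "\<dots> = Sum_any (\<lambda>s. Sum_any (\<lambda>u. H2 P Q b \<alpha> (s,u)))" by (rule arg_cong[where f=Sum_any], rule ext, rule g)
  also have "\<dots> = Sum_any (\<lambda>(s,u). H2 P Q b \<alpha> (s,u))"
    by (rule SA_flat, rule fin_pair[OF H2_fin[OF P Q]])
  also have "\<dots> = Sum_any (H2 P Q b \<alpha>)" by (simp add: case_prod_unfold)
  also have "\<dots> = Sum_any (\<lambda>y. Sum_any (\<lambda>x. if piR x = y then H2 P Q b \<alpha> x else 0))"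
    by (rule SA_group[OF H2_fin[OF P Q]])
  also have "\<dots> = Sum_any (IR P Q b \<alpha>)"
    by (rule Sum_any.cong, case_tac a rule: prod_cases5, simp only: inner_R)
  finally show ?thesis .
qed


lemma FF_zero: "\<not> i \<le> \<sigma> \<Longrightarrow> FF \<sigma> i = 0"
proof -
  assume "\<not> i \<le> \<sigma>"
  then obtain j where j: "\<sigma> j < i j" by (auto simp: le_fun_def not_le)
  then have "ffn (\<sigma> j) (i j) = 0" by (simp add: ffn_def)
  then show "FF \<sigma> i = 0" unfolding FF_def by (intro prod_zero) (auto intro!: bexI[of _ j])
qed

lemma E2_iff:
  fixes \<beta> \<alpha> l \<tau> \<sigma> k :: "('n::finite) mi"
  assumes "\<beta> \<le> \<alpha>" "l \<le> \<tau>"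
  shows "madd \<sigma> (msub \<tau> l) = madd (msub \<alpha> \<beta>) k \<longleftrightarrow> madd \<beta> (madd \<sigma> \<tau>) = madd \<alpha> (madd k l)"
proof -
  have h: "\<beta> x \<le> \<alpha> x" "l x \<le> \<tau> x" for x using assms by (auto simp: le_fun_def)
  have "(\<sigma> x + (\<tau> x - l x) = \<alpha> x - \<beta> x + k x) \<longleftrightarrow> (\<beta> x + (\<sigma> x + \<tau> x) = \<alpha> x + (k x + l x))" for x
    using h[of x] by linarith
  then show ?thesis by (simp add: fun_eq_iff)
qed

lemma eqA:
  fixes \<beta> \<alpha> l \<tau> \<sigma> k :: "('n::finite) mi"
  assumes "\<beta> \<le> \<alpha>" "l \<le> \<tau>" "madd \<beta> (madd \<sigma> \<tau>) = madd \<alpha> (madd k l)"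
  shows "madd (msub \<alpha> \<beta>) k = msub (madd \<sigma> \<tau>) l"
proof (rule ext)
  fix x
  have "\<beta> x \<le> \<alpha> x" "l x \<le> \<tau> x" using assms by (auto simp: le_fun_def)
  moreover have "\<beta> x + (\<sigma> x + \<tau> x) = \<alpha> x + (k x + l x)" using fun_cong[OF assms(3), of x] by simp
  ultimately show "\<alpha> x - \<beta> x + k x = \<sigma> x + \<tau> x - l x" by linarith
qed

lemma implA:
  fixes \<beta> \<alpha> l \<tau> \<sigma> k i :: "('n::finite) mi"
  assumes "i \<le> k" "madd \<beta> (madd \<sigma> \<tau>) = madd \<alpha> (madd k l)" "i \<le> \<sigma>" "msub (madd k l) i \<le> \<tau>"
  shows "\<beta> \<le> \<alpha> \<and> l \<le> \<tau>"
proof -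
  have "\<beta> x \<le> \<alpha> x \<and> l x \<le> \<tau> x" for x
  proof -
    have "i x \<le> k x" "i x \<le> \<sigma> x" "k x + l x - i x \<le> \<tau> x" using assms by (auto simp: le_fun_def)
    moreover have "\<beta> x + (\<sigma> x + \<tau> x) = \<alpha> x + (k x + l x)" using fun_cong[OF assms(2), of x] by simp
    ultimately show ?thesis by linarith
  qed
  then show ?thesis by (auto simp: le_fun_def)
qed

lemma IL_IR: "IL P Q b \<alpha> y = IR P Q b \<alpha> y"
proof -
  obtain k \<beta> l \<sigma> \<tau> where y: "y = (k,\<beta>,l,\<sigma>,\<tau>)" by (metis prod.collapse)
  define E where "E = (madd \<beta> (madd \<sigma> \<tau>) = madd \<alpha> (madd k l))"
  define c where "c = (\<lambda>i. mbinom k i * FF \<sigma> i * FF \<tau> (msub (madd k l) i))"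
  have trm: "(if E \<and> i \<le> \<sigma> \<and> msub (madd k l) i \<le> \<tau>
        then mbinom k i * (P k \<beta> * (FF \<sigma> i * Q l \<sigma>)) * (FF \<tau> (msub (madd k l) i) * b \<tau>) else 0)
      = (if E then c i * (P k \<beta> * Q l \<sigma> * b \<tau>) else 0)" for i
  proof (cases "i \<le> \<sigma> \<and> msub (madd k l) i \<le> \<tau>")
    case True then show ?thesis by (simp add: c_def mult_ac)
  next
    case False
    then have "c i = 0" unfolding c_def using FF_zero by auto
    then show ?thesis using False by auto
  qed
  have IL: "IL P Q b \<alpha> y = (if E then (\<Sum>i\<in>{i. i \<le> k}. c i) * (P k \<beta> * Q l \<sigma> * b \<tau>) else 0)"
    unfolding y IL_def prod.case E_def[symmetric] trm by (simp add: sum_distrib_right)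
  show ?thesis
  proof (cases "\<beta> \<le> \<alpha> \<and> l \<le> \<tau> \<and> E")
    case True
    then have ba: "\<beta> \<le> \<alpha>" and lt: "l \<le> \<tau>" and E: E by auto
    have "(\<Sum>i\<in>{i. i \<le> k}. c i) = FF (msub (madd \<sigma> \<tau>) l) k * FF \<tau> l"
      unfolding c_def by (rule leib_multi[OF lt])
    moreover have cond: "madd \<sigma> (msub \<tau> l) = madd (msub \<alpha> \<beta>) k"
      using E2_iff[OF ba lt] E unfolding E_def by blast
    moreover have "madd (msub \<alpha> \<beta>) k = msub (madd \<sigma> \<tau>) l"
      using eqA[OF ba lt] E unfolding E_def by blast
    ultimately show ?thesis using IL E ba lt unfolding y IR_def prod.case
      by (simp add: mult_ac)
  next
    case False
    have IR0: "IR P Q b \<alpha> y = 0"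
    proof (cases "\<beta> \<le> \<alpha> \<and> l \<le> \<tau>")
      case True
      then have "\<not> E" using False by blast
      then have "madd \<sigma> (msub \<tau> l) \<noteq> madd (msub \<alpha> \<beta>) k"
        using E2_iff True unfolding E_def by blast
      then show ?thesis by (simp add: y IR_def)
    next
      case False then show ?thesis by (auto simp: y IR_def)
    qed
    have "(if E then (\<Sum>i\<in>{i. i \<le> k}. c i) * (P k \<beta> * Q l \<sigma> * b \<tau>) else 0) = 0"
    proof (cases E)
      case True
      then have nb: "\<not> (\<beta> \<le> \<alpha> \<and> l \<le> \<tau>)" using False by blast
      have "c i = 0" if "i \<in> {i. i \<le> k}" for i
      proof (cases "i \<le> \<sigma> \<and> msub (madd k l) i \<le> \<tau>")
        case True
        then have "\<beta> \<le> \<alpha> \<and> l \<le> \<tau>"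
          using implA[of i k \<beta> \<sigma> \<tau> \<alpha> l] that \<open>E\<close> unfolding E_def by blast
        then show ?thesis using nb by blast
      next
        case False then show ?thesis unfolding c_def using FF_zero by auto
      qed
      then show ?thesis by simp
    qed simp
    then show ?thesis using IL IR0 by simp
  qed
qed

lemma hom:
  assumes "bnd C1 P" "bnd C2 Q"
  shows "op_apply (op_mult P Q) b = op_apply P (op_apply Q b)"
proof (rule ext)
  fix \<alpha>
  show "op_apply (op_mult P Q) b \<alpha> = op_apply P (op_apply Q b) \<alpha>"
    using LHS_SA[OF assms] RHS_SA[OF assms] IL_IR by (metis ext)
qed


lemma bnd_add: "bnd C1 P \<Longrightarrow> bnd C2 Q \<Longrightarrow> bnd (C1 + C2) (op_add P Q)"
  unfolding bnd_def op_add_def by (metis add.left_neutral add_le_mono le_add1 le_add2 order.trans)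

lemma bnd_smult: "bnd C P \<Longrightarrow> bnd C (op_smult c P)"
  unfolding bnd_def op_smult_def by auto

lemma bnd_zero: "bnd 0 op_zero"
  unfolding bnd_def op_zero_def by auto

lemma bnd_one: "bnd 0 op_one"
  unfolding bnd_def op_one_def coeff_op_def ps_zero_def by (auto simp: mi_zero_def deg_def)

lemma app_add_b:
  assumes "bnd C P"
  shows "op_apply P (\<lambda>\<alpha>. b \<alpha> + c \<alpha>) = (\<lambda>\<alpha>. op_apply P b \<alpha> + op_apply P c \<alpha>)"
proof (rule ext)
  fix \<alpha>
  have "gA P (\<lambda>\<alpha>. b \<alpha> + c \<alpha>) \<alpha> = (\<lambda>t. gA P b \<alpha> t + gA P c \<alpha> t)"
    by (rule ext) (simp add: gA_def split: prod.split add: algebra_simps)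
  then show "op_apply P (\<lambda>\<alpha>. b \<alpha> + c \<alpha>) \<alpha> = op_apply P b \<alpha> + op_apply P c \<alpha>"
    using app_SA[OF assms] Sum_any.distrib[OF gA_fin[OF assms] gA_fin[OF assms]] by metis
qed

lemma app_smult_b:
  assumes "bnd C P"
  shows "op_apply P (\<lambda>\<alpha>. s * b \<alpha>) = (\<lambda>\<alpha>. s * op_apply P b \<alpha>)"
proof (rule ext)
  fix \<alpha>
  have "gA P (\<lambda>\<alpha>. s * b \<alpha>) \<alpha> = (\<lambda>t. s * gA P b \<alpha> t)"
    by (rule ext) (simp add: gA_def split: prod.split add: algebra_simps)
  then show "op_apply P (\<lambda>\<alpha>. s * b \<alpha>) \<alpha> = s * op_apply P b \<alpha>"
    using app_SA[OF assms] Sum_any_right_distrib[OF gA_fin[OF assms]] by metis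
qed

lemma app_diff_b:
  assumes "bnd C P"
  shows "op_apply P (\<lambda>\<alpha>. c \<alpha> - b \<alpha>) = (\<lambda>\<alpha>. op_apply P c \<alpha> - op_apply P b \<alpha>)"
proof -
  have "(\<lambda>\<alpha>. c \<alpha> - b \<alpha>) = (\<lambda>\<alpha>. c \<alpha> + (-1) * b \<alpha>)" by simp
  then have "op_apply P (\<lambda>\<alpha>. c \<alpha> - b \<alpha>) = op_apply P (\<lambda>\<alpha>. c \<alpha> + (-1) * b \<alpha>)" by simp
  also have "\<dots> = (\<lambda>\<alpha>. op_apply P c \<alpha> + op_apply P (\<lambda>\<alpha>. (-1) * b \<alpha>) \<alpha>)"
    by (rule app_add_b[OF assms])
  also have "\<dots> = (\<lambda>\<alpha>. op_apply P c \<alpha> - op_apply P b \<alpha>)"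
    by (simp only: app_smult_b[OF assms]) simp
  finally show ?thesis .
qed

lemma app_add_P:
  assumes "bnd C1 P" "bnd C2 Q"
  shows "op_apply (op_add P Q) b = (\<lambda>\<alpha>. op_apply P b \<alpha> + op_apply Q b \<alpha>)"
proof (rule ext)
  fix \<alpha>
  have "gA (op_add P Q) b \<alpha> = (\<lambda>t. gA P b \<alpha> t + gA Q b \<alpha> t)"
    by (rule ext) (simp add: gA_def op_add_def split: prod.split add: algebra_simps)
  then show "op_apply (op_add P Q) b \<alpha> = op_apply P b \<alpha> + op_apply Q b \<alpha>"
    using app_SA[OF bnd_add[OF assms]] app_SA[OF assms(1)] app_SA[OF assms(2)]
      Sum_any.distrib[OF gA_fin[OF assms(1)] gA_fin[OF assms(2)]] by metis
qed

lemma app_smult_P: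
  assumes "bnd C P"
  shows "op_apply (op_smult s P) b = (\<lambda>\<alpha>. s * op_apply P b \<alpha>)"
proof (rule ext)
  fix \<alpha>
  have "gA (op_smult s P) b \<alpha> = (\<lambda>t. s * gA P b \<alpha> t)"
    by (rule ext) (simp add: gA_def op_smult_def split: prod.split add: algebra_simps)
  then show "op_apply (op_smult s P) b \<alpha> = s * op_apply P b \<alpha>"
    using app_SA[OF bnd_smult[OF assms]] app_SA[OF assms] Sum_any_right_distrib[OF gA_fin[OF assms]] by metis
qed

lemma FF_0: "FF g (\<lambda>_. 0) = 1"
  by (simp add: FF_def ffn_def)

lemma app_one: "op_apply op_one = id"
proof (rule ext, rule ext)
  fix b and \<alpha> :: "'a::finite mi"
  have "gA op_one b \<alpha> = (\<lambda>t. if t = ((\<lambda>_. 0), (\<lambda>_. 0), \<alpha>) then b \<alpha> else 0)"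
  proof (rule ext)
    fix t :: "'a mi \<times> 'a mi \<times> 'a mi"
    obtain k \<beta> \<epsilon> where t: "t = (k,\<beta>,\<epsilon>)" by (metis prod.collapse)
    show "gA op_one b \<alpha> t = (if t = ((\<lambda>_. 0), (\<lambda>_. 0), \<alpha>) then b \<alpha> else 0)"
    proof (cases "k = (\<lambda>_. 0) \<and> \<beta> = (\<lambda>_. 0)")
      case True
      then show ?thesis by (auto simp: t gA_def op_one_def coeff_op_def mi_zero_def FF_0)
    next
      case False
      then show ?thesis by (auto simp: t gA_def op_one_def coeff_op_def mi_zero_def ps_zero_def)
    qed
  qed
  then have "Sum_any (gA op_one b \<alpha>) = b \<alpha>" by simp
  then show "op_apply op_one b \<alpha> = id b \<alpha>"
    using app_SA[OF bnd_one, of b \<alpha>] by simp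
qed

lemma FF_self_nz: "FF k k \<noteq> 0"
  by (simp add: FF_def ffn_def)

lemma zero_of_app:
  assumes R: "bnd C R" and z: "\<And>b. op_apply R b = (\<lambda>\<alpha>. 0)"
  shows "R k0 \<beta>0 = 0"
proof (rule ccontr)
  assume nz0: "R k0 \<beta>0 \<noteq> 0"
  define d where "d = (LEAST n. \<exists>k \<beta>. deg k = n \<and> R k \<beta> \<noteq> 0)"
  have "\<exists>k \<beta>. deg k = d \<and> R k \<beta> \<noteq> 0"
    unfolding d_def by (rule LeastI[of _ "deg k0"]) (use nz0 in blast)
  then obtain k \<beta> where kb: "deg k = d" "R k \<beta> \<noteq> 0" by blast
  have minl: "d \<le> deg k'" if "R k' \<beta>' \<noteq> 0" for k' \<beta>'
    unfolding d_def by (rule Least_le) (use that in blast)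
  define e where "e = (\<lambda>\<gamma>. if \<gamma> = k then (1::complex) else 0)"
  have "gA R e \<beta> = (\<lambda>t. if t = (k, \<beta>, (\<lambda>_. 0)) then R k \<beta> * FF k k else 0)"
  proof (rule ext)
    fix t :: "'a mi \<times> 'a mi \<times> 'a mi"
    obtain k' \<beta>' \<epsilon> where t: "t = (k',\<beta>',\<epsilon>)" by (metis prod.collapse)
    show "gA R e \<beta> t = (if t = (k, \<beta>, (\<lambda>_. 0)) then R k \<beta> * FF k k else 0)"
    proof (cases "gA R e \<beta> t = 0")
      case False
      then have h: "madd \<beta>' \<epsilon> = \<beta>" "R k' \<beta>' \<noteq> 0" "madd \<epsilon> k' = k"
        by (auto simp: t gA_def e_def split: if_splits)
      have "deg \<epsilon> + deg k' = deg k" using h(3) deg_madd by metis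
      moreover have "deg k \<le> deg k'" using minl[OF h(2)] kb by simp
      ultimately have "deg \<epsilon> = 0" by simp
      then have e0: "\<epsilon> = (\<lambda>_. 0)" using deg_eq_0[of \<epsilon>] unfolding mi_zero_def by blast
      then have "k' = k" "\<beta>' = \<beta>" using h by auto
      then show ?thesis using e0 by (simp add: t gA_def e_def)
    next
      case True
      then show ?thesis by (auto simp: t gA_def e_def FF_self_nz kb)
    qed
  qed
  then have "op_apply R e \<beta> = R k \<beta> * FF k k" using app_SA[OF R] by simp
  moreover have "R k \<beta> * FF k k \<noteq> 0" using kb FF_self_nz by simp
  ultimately show False using z by metis
qed

lemma inj_S:
  assumes P: "bnd C1 P" and Q: "bnd C2 Q" and eq: "op_apply P = op_apply Q"
  shows "P = Q"
proof -
  let ?R = "op_add P (op_smult (-1) Q)"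
  have R: "bnd (C1+C2) ?R" by (rule bnd_add[OF P bnd_smult[OF Q]])
  have "op_apply ?R b = (\<lambda>\<alpha>. 0)" for b
    using app_add_P[OF P bnd_smult[OF Q]] app_smult_P[OF Q] eq by simp
  then have "?R k \<beta> = 0" for k \<beta> using zero_of_app[OF R] by blast
  then have "P k \<beta> = Q k \<beta>" for k \<beta> by (simp add: op_add_def op_smult_def)
  then show ?thesis by (simp add: fun_eq_iff)
qed

lemma cont:
  assumes P: "bnd C P"
  shows "madic_continuous (op_apply P)"
  unfolding madic_continuous_def
proof (intro allI)
  fix b :: "'a ps" and N :: nat
  show "\<exists>M. \<forall>c. enat M \<le> mval (\<lambda>\<alpha>. c \<alpha> - b \<alpha>) \<longrightarrow> enat N \<le> mval (\<lambda>\<alpha>. op_apply P c \<alpha> - op_apply P b \<alpha>)"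
  proof (intro exI allI impI)
    fix c :: "'a ps"
    assume "enat (N + C) \<le> mval (\<lambda>\<alpha>. c \<alpha> - b \<alpha>)"
    then have d: "\<And>\<alpha>. c \<alpha> - b \<alpha> \<noteq> 0 \<Longrightarrow> N + C \<le> deg \<alpha>" by (simp add: mval_ge)
    have "N \<le> deg \<alpha>" if "op_apply P (\<lambda>\<alpha>. c \<alpha> - b \<alpha>) \<alpha> \<noteq> 0" for \<alpha>
    proof -
      from that have "Sum_any (gA P (\<lambda>\<alpha>. c \<alpha> - b \<alpha>) \<alpha>) \<noteq> 0" using app_SA[OF P] by simp
      then obtain t where "gA P (\<lambda>\<alpha>. c \<alpha> - b \<alpha>) \<alpha> t \<noteq> 0" by (rule Sum_any.not_neutral_obtains_not_neutral)
      then obtain k \<beta> \<epsilon> where "gA P (\<lambda>\<alpha>. c \<alpha> - b \<alpha>) \<alpha> (k,\<beta>,\<epsilon>) \<noteq> 0" by (metis prod.collapse)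
      then have h: "madd \<beta> \<epsilon> = \<alpha>" "P k \<beta> \<noteq> 0" "c (madd \<epsilon> k) - b (madd \<epsilon> k) \<noteq> 0"
        by (auto simp: gA_def split: if_splits)
      have "deg \<alpha> = deg \<beta> + deg \<epsilon>" using h deg_madd by metis
      moreover have "deg k \<le> deg \<beta> + C" using P h unfolding bnd_def by blast
      moreover have "N + C \<le> deg \<epsilon> + deg k" using d[OF h(3)] deg_madd by metis
      ultimately show ?thesis by linarith
    qed
    then show "enat N \<le> mval (\<lambda>\<alpha>. op_apply P c \<alpha> - op_apply P b \<alpha>)"
      unfolding mval_ge using app_diff_b[OF P, of c b] by metis
  qed
qed

lemma linear_P: "bnd C P \<Longrightarrow> linear_endo (op_apply P)"
  unfolding linear_endo_def using app_add_b app_smult_b by blast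

lemma app_term_fin:
  assumes P: "bnd C P"
  shows "finite {k. app_term P b \<alpha> k \<noteq> 0}"
proof (rule finite_subset)
  show "{k. app_term P b \<alpha> k \<noteq> 0} \<subseteq> BB (deg \<alpha> + C)"
  proof
    fix k assume "k \<in> {k. app_term P b \<alpha> k \<noteq> 0}"
    then have "ps_mult (P k) (ps_deriv k b) \<alpha> \<noteq> 0" by (simp add: app_term_def)
    then obtain \<beta> where "\<beta> \<le> \<alpha>" "P k \<beta> \<noteq> 0" unfolding ps_mult_def
      by (auto elim: sum.not_neutral_contains_not_neutral)
    then show "k \<in> BB (deg \<alpha> + C)" using P deg_mono unfolding bnd_def by fastforce
  qed
  show "finite (BB (deg \<alpha> + C))" by (rule finite_deg)
qed


lemma S_ring_simps[simp]:
  "carrier S_ring = S_set" "monoid.mult S_ring = op_mult" "monoid.one S_ring = op_one"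
  "ring.zero S_ring = op_zero" "ring.add S_ring = op_add" "module.smult S_ring = op_smult"
  by (simp_all add: S_ring_def)

lemma CC_simps[simp]:
  "carrier CC = UNIV" "monoid.mult CC = (*)" "monoid.one CC = 1" "ring.zero CC = 0" "ring.add CC = (+)"
  by (simp_all add: CC_def)

lemma inS: "P \<in> S_set \<Longrightarrow> (\<And>C. bnd C P \<Longrightarrow> thesis) \<Longrightarrow> thesis"
  using S_iff by blast

lemma S_add: "P \<in> S_set \<Longrightarrow> Q \<in> S_set \<Longrightarrow> op_add P Q \<in> S_set"
  by (meson S_iff bnd_add)
lemma S_mult: "P \<in> S_set \<Longrightarrow> Q \<in> S_set \<Longrightarrow> op_mult P Q \<in> S_set"
  by (meson S_iff bnd_mult)
lemma S_smult: "P \<in> S_set \<Longrightarrow> op_smult c P \<in> S_set"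
  by (meson S_iff bnd_smult)
lemma S_zero: "op_zero \<in> S_set"
  using S_iff bnd_zero by blast
lemma S_one: "op_one \<in> S_set"
  using S_iff bnd_one by blast

lemma hom_S: "P \<in> S_set \<Longrightarrow> Q \<in> S_set \<Longrightarrow> op_apply (op_mult P Q) = op_apply P \<circ> op_apply Q"
proof -
  assume "P \<in> S_set" "Q \<in> S_set"
  then obtain C1 C2 where "bnd C1 P" "bnd C2 Q" using S_iff by blast
  then show ?thesis by (intro ext) (simp add: hom)
qed

lemma inj_S': "P \<in> S_set \<Longrightarrow> Q \<in> S_set \<Longrightarrow> op_apply P = op_apply Q \<Longrightarrow> P = Q"
  by (meson S_iff inj_S)

lemma add_S: "P \<in> S_set \<Longrightarrow> Q \<in> S_set \<Longrightarrow> op_apply (op_add P Q) b = (\<lambda>\<alpha>. op_apply P b \<alpha> + op_apply Q b \<alpha>)"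
  by (meson S_iff app_add_P)

lemma addb_S: "P \<in> S_set \<Longrightarrow> op_apply P (\<lambda>\<alpha>. b \<alpha> + c \<alpha>) = (\<lambda>\<alpha>. op_apply P b \<alpha> + op_apply P c \<alpha>)"
proof -
  assume "P \<in> S_set"
  then obtain C1 where "bnd C1 P" using S_iff by blast
  then show ?thesis by (rule app_add_b)
qed

lemma smultb_S: "P \<in> S_set \<Longrightarrow> op_apply P (\<lambda>\<alpha>. s * b \<alpha>) = (\<lambda>\<alpha>. s * op_apply P b \<alpha>)"
proof -
  assume "P \<in> S_set"
  then obtain C1 where "bnd C1 P" using S_iff by blast
  then show ?thesis by (rule app_smult_b)
qed

lemma smult_S: "P \<in> S_set \<Longrightarrow> op_apply (op_smult s P) b = (\<lambda>\<alpha>. s * op_apply P b \<alpha>)"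
  by (meson S_iff app_smult_P)

lemma ag: "abelian_group (S_ring :: (complex, ('n::finite) dop) module)"
proof (rule abelian_groupI, simp_all)
  fix x y :: "'n dop" assume "x \<in> S_set" "y \<in> S_set"
  then show "op_add x y \<in> S_set" by (rule S_add)
next
  show "op_zero \<in> S_set" by (rule S_zero)
next
  fix x y z :: "'n dop"
  show "op_add (op_add x y) z = op_add x (op_add y z)" by (simp add: op_add_def algebra_simps)
  show "op_add x y = op_add y x" by (simp add: op_add_def algebra_simps)
  show "op_add op_zero x = x" by (simp add: op_add_def op_zero_def)
next
  fix x :: "'n dop" assume x: "x \<in> S_set"
  show "\<exists>y\<in>S_set. op_add y x = op_zero"
  proof (rule bexI[of _ "op_smult (-1) x"])
    show "op_smult (-1) x \<in> S_set" by (rule S_smult[OF x])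
    show "op_add (op_smult (-1) x) x = op_zero" by (simp add: op_add_def op_smult_def op_zero_def)
  qed
qed

lemma mon: "monoid (S_ring :: (complex, ('n::finite) dop) module)"
proof (rule monoidI, simp_all)
  fix x y :: "'n dop" assume "x \<in> S_set" "y \<in> S_set"
  then show "op_mult x y \<in> S_set" by (rule S_mult)
next
  show "op_one \<in> S_set" by (rule S_one)
next
  fix x y z :: "'n dop" assume x: "x \<in> S_set" and y: "y \<in> S_set" and z: "z \<in> S_set"
  show "op_mult (op_mult x y) z = op_mult x (op_mult y z)"
    by (rule inj_S') (simp_all add: x y z S_mult hom_S comp_assoc)
next
  fix x :: "'n dop" assume x: "x \<in> S_set"
  show "op_mult op_one x = x" by (rule inj_S') (simp_all add: x S_one S_mult hom_S app_one)
  show "op_mult x op_one = x" by (rule inj_S') (simp_all add: x S_one S_mult hom_S app_one)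
qed

lemma ring_S: "ring (S_ring :: (complex, ('n::finite) dop) module)"
proof (rule ringI[OF ag mon], simp_all)
  fix x y z :: "'n dop" assume x: "x \<in> S_set" and y: "y \<in> S_set" and z: "z \<in> S_set"
  show "op_mult (op_add x y) z = op_add (op_mult x z) (op_mult y z)"
  proof (rule inj_S')
    show "op_apply (op_mult (op_add x y) z) = op_apply (op_add (op_mult x z) (op_mult y z))"
      by (rule ext) (simp add: x y z S_mult S_add hom_S add_S)
  qed (simp_all add: x y z S_mult S_add)
  show "op_mult z (op_add x y) = op_add (op_mult z x) (op_mult z y)"
  proof (rule inj_S')
    show "op_apply (op_mult z (op_add x y)) = op_apply (op_add (op_mult z x) (op_mult z y))"
      by (rule ext) (simp add: x y z S_mult S_add hom_S add_S addb_S)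
  qed (simp_all add: x y z S_mult S_add)
qed

lemma cring_CC: "cring CC"
proof (rule cringI)
  show "abelian_group CC"
    by (rule abelian_groupI) (auto simp: algebra_simps intro: exI[of _ "- x" for x] bexI[of _ "- x" for x])
  show "Group.comm_monoid CC"
    by (rule comm_monoidI) (auto simp: algebra_simps)
qed (simp add: algebra_simps)

lemma module_S: "module CC (S_ring :: (complex, ('n::finite) dop) module)"
proof (rule moduleI[OF cring_CC ag], simp_all)
  fix a b :: complex and x y :: "'n dop"
  show "x \<in> S_set \<Longrightarrow> op_smult a x \<in> S_set" by (rule S_smult)
  show "op_smult (a + b) x = op_add (op_smult a x) (op_smult b x)"
    by (simp add: op_smult_def op_add_def algebra_simps)
  show "op_smult a (op_add x y) = op_add (op_smult a x) (op_smult a y)"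
    by (simp add: op_smult_def op_add_def algebra_simps)
  show "op_smult (a * b) x = op_smult a (op_smult b x)"
    by (simp add: op_smult_def algebra_simps)
  show "op_smult 1 x = x"
    by (simp add: op_smult_def)
qed

lemma smult_mult:
  assumes P: "P \<in> S_set" and Q: "Q \<in> S_set"
  shows "op_smult c (op_mult P Q) = op_mult (op_smult c P) Q \<and> op_smult c (op_mult P Q) = op_mult P (op_smult c Q)"
proof
  show "op_smult c (op_mult P Q) = op_mult (op_smult c P) Q"
    by (rule inj_S') (simp_all add: P Q S_smult S_mult hom_S smult_S fun_eq_iff)
  show "op_smult c (op_mult P Q) = op_mult P (op_smult c Q)"
    by (rule inj_S') (simp_all add: P Q S_smult S_mult hom_S smult_S smultb_S fun_eq_iff)
qed


lemma ps_mult_nz: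
  assumes "ps_mult a c \<alpha> \<noteq> 0" shows "\<exists>\<beta>. \<beta> \<le> \<alpha> \<and> a \<beta> \<noteq> 0 \<and> c (msub \<alpha> \<beta>) \<noteq> 0"
proof -
  from assms obtain \<beta> where "\<beta> \<in> {\<beta>. \<beta> \<le> \<alpha>}" "a \<beta> * c (msub \<alpha> \<beta>) \<noteq> 0"
    unfolding ps_mult_def by (rule sum.not_neutral_contains_not_neutral)
  then show ?thesis by auto
qed

lemma ps_mult_zero_l: "ps_mult ps_zero c = ps_zero"
  by (simp add: ps_mult_def ps_zero_def)

lemma ps_mult_zero_l'[simp]: "ps_mult (\<lambda>_. 0) c = (\<lambda>_. 0)"
  by (simp add: ps_mult_def)

lemma ps_deriv_zero: "ps_deriv i ps_zero = ps_zero"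
  by (simp add: ps_deriv_def ps_zero_def)

lemma bounded_finite_deg: "finite (F :: ('n::finite) mi set) \<Longrightarrow> \<exists>C. \<forall>k\<in>F. deg k \<le> C"
  using finite_nat_set_iff_bounded_le[of "deg ` F"] by auto

lemma D_sub_S: "P \<in> D_set \<Longrightarrow> P \<in> S_set"
proof -
  assume "P \<in> D_set"
  then have "finite {k. P k \<noteq> ps_zero}" by (simp add: D_set_def)
  then obtain C where C: "\<forall>k\<in>{k. P k \<noteq> ps_zero}. deg k \<le> C" using bounded_finite_deg by blast
  have "bnd C P" unfolding bnd_def
  proof (intro allI impI)
    fix k \<beta> assume "P k \<beta> \<noteq> 0"
    then have "P k \<noteq> ps_zero" by (auto simp: ps_zero_def)
    then show "deg k \<le> deg \<beta> + C" using C by auto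
  qed
  then show ?thesis using S_iff by blast
qed

lemma D_smult: "P \<in> D_set \<Longrightarrow> op_smult c P \<in> D_set"
  unfolding D_set_def mem_Collect_eq
  by (rule finite_subset[rotated], assumption) (auto simp: op_smult_def ps_zero_def fun_eq_iff)

lemma D_add: "P \<in> D_set \<Longrightarrow> Q \<in> D_set \<Longrightarrow> op_add P Q \<in> D_set"
  unfolding D_set_def mem_Collect_eq
  by (rule finite_subset[of _ "{k. P k \<noteq> ps_zero} \<union> {k. Q k \<noteq> ps_zero}"])
     (auto simp: op_add_def ps_zero_def fun_eq_iff)

lemma D_one: "op_one \<in> D_set"
  unfolding D_set_def mem_Collect_eq
  by (rule finite_subset[of _ "{mi_zero}"]) (auto simp: op_one_def coeff_op_def)

lemma D_mult:
  assumes P: "P \<in> D_set" and Q: "Q \<in> D_set"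
  shows "op_mult P Q \<in> D_set"
proof -
  let ?FP = "{k. P k \<noteq> ps_zero}" and ?FQ = "{k. Q k \<noteq> ps_zero}"
  let ?T = "?FP \<times> ?FQ \<times> (\<Union>k\<in>?FP. {i. i \<le> k})"
  have fin: "finite ?T" using P Q by (simp add: D_set_def finite_le)
  have "{m. op_mult P Q m \<noteq> ps_zero} \<subseteq> (\<lambda>(k,l,i). msub (madd k l) i) ` ?T"
  proof
    fix m assume "m \<in> {m. op_mult P Q m \<noteq> ps_zero}"
    then obtain \<alpha> where "op_mult P Q m \<alpha> \<noteq> 0" by (auto simp: ps_zero_def fun_eq_iff)
    then have "Sum_any (leib_term P Q m \<alpha>) \<noteq> 0" by (simp add: op_mult_def Sum_any.expand_set)
    then obtain t where "leib_term P Q m \<alpha> t \<noteq> 0" by (rule Sum_any.not_neutral_obtains_not_neutral)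
    then obtain k l i where nz: "leib_term P Q m \<alpha> (k,l,i) \<noteq> 0" by (metis prod.collapse)
    then have h: "i \<le> k" "msub (madd k l) i = m" "ps_mult (P k) (ps_deriv i (Q l)) \<alpha> \<noteq> 0"
      by (auto simp: leib_term_def split: if_splits)
    obtain \<beta> where b: "P k \<beta> \<noteq> 0" "ps_deriv i (Q l) (msub \<alpha> \<beta>) \<noteq> 0"
      using ps_mult_nz[OF h(3)] by blast
    have "P k \<noteq> ps_zero" using b(1) by (auto simp: ps_zero_def)
    moreover have "Q l \<noteq> ps_zero" using b(2) by (auto simp: ps_zero_def ps_deriv_def)
    ultimately show "m \<in> (\<lambda>(k,l,i). msub (madd k l) i) ` ?T"
      using h by (auto intro!: image_eqI[of _ _ "(k,l,i)"])
  qed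
  then show ?thesis using finite_subset[OF _ finite_imageI[OF fin]] by (simp add: D_set_def)
qed

lemma D_action_eq:
  assumes P: "P \<in> D_set"
  shows "op_apply P = D_action P"
proof (intro ext)
  fix b \<alpha>
  let ?F = "{k. P k \<noteq> ps_zero}"
  have "op_apply P b \<alpha> = Sum_any (app_term P b \<alpha>)" by (simp add: op_apply_def Sum_any.expand_set)
  also have "\<dots> = sum (app_term P b \<alpha>) ?F"
  proof (rule Sum_any.expand_superset)
    show "finite ?F" using P by (simp add: D_set_def)
    show "{a. app_term P b \<alpha> a \<noteq> 0} \<subseteq> ?F"
      by (auto simp: app_term_def ps_zero_def)
  qed
  finally show "op_apply P b \<alpha> = D_action P b \<alpha>" by (simp add: D_action_def app_term_def)
qed

lemma a_inv_S:
  assumes "x \<in> S_set"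
  shows "a_inv (S_ring :: (complex, ('n::finite) dop) module) x = op_smult (-1) x"
proof (rule abelian_group.minus_equality[OF ag])
  show "op_smult (-1) x \<oplus>\<^bsub>(S_ring :: (complex, 'n dop) module)\<^esub> x = \<zero>\<^bsub>(S_ring :: (complex, 'n dop) module)\<^esub>"
    by (simp add: op_add_def op_smult_def op_zero_def)
qed (simp_all add: assms S_smult)

lemma D_subring: "subring D_set (S_ring :: (complex, ('n::finite) dop) module)"
proof (rule ring.subringI[OF ring_S], simp_all)
  show "D_set \<subseteq> S_set" using D_sub_S by blast
  show "op_one \<in> D_set" by (rule D_one)
next
  fix h :: "'n dop" assume "h \<in> D_set"
  then show "a_inv (S_ring :: (complex, 'n dop) module) h \<in> D_set"
    using a_inv_S D_sub_S D_smult by metis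
next
  fix h1 h2 :: "'n dop" assume "h1 \<in> D_set" "h2 \<in> D_set"
  then show "op_mult h1 h2 \<in> D_set" "op_add h1 h2 \<in> D_set" using D_mult D_add by blast+
qed

lemma coeff_mult:
  fixes f :: "('n::finite) ps" and P :: "'n dop"
  shows "op_mult (coeff_op f) P k \<alpha> = ps_mult f (P k) \<alpha>"
proof -
  have "leib_term (coeff_op f) P k \<alpha> = (\<lambda>t. if t = ((\<lambda>_. 0), k, (\<lambda>_. 0)) then ps_mult f (P k) \<alpha> else 0)"
  proof (rule ext)
    fix t :: "'n mi \<times> 'n mi \<times> 'n mi"
    obtain k' l i where t: "t = (k',l,i)" by (metis prod.collapse)
    show "leib_term (coeff_op f) P k \<alpha> t = (if t = ((\<lambda>_. 0), k, (\<lambda>_. 0)) then ps_mult f (P k) \<alpha> else 0)"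
    proof (cases "k' = (\<lambda>_. 0)")
      case False
      then show ?thesis by (auto simp: t leib_term_def coeff_op_def mi_zero_def ps_mult_zero_l ps_zero_def)
    next
      case True
      show ?thesis
      proof (cases "i \<le> k'")
        case False then show ?thesis by (auto simp: t leib_term_def)
      next
        case ik: True
        then have i0: "i = (\<lambda>_. 0)" using True by (auto simp: le_fun_def fun_eq_iff)
        have "ps_deriv (\<lambda>_. 0) (P l) = P l" by (simp add: ps_deriv_def)
        moreover have "mbinom (\<lambda>_. 0) (\<lambda>_. 0) = 1" by (simp add: mbinom_def)
        ultimately show ?thesis using True i0
          by (auto simp: t leib_term_def coeff_op_def mi_zero_def)
      qed
    qed
  qed
  then show ?thesis by (simp add: op_mult_def Sum_any.expand_set[symmetric])
qed

lemma ps_mult_at0: "ps_mult a c (\<lambda>_. 0) = a (\<lambda>_. 0) * c (\<lambda>_. 0)"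
proof -
  have e: "{\<beta>. \<beta> \<le> (\<lambda>_. 0::nat)} = {(\<lambda>_. 0)}" by (auto simp: le_fun_def fun_eq_iff)
  show ?thesis unfolding ps_mult_def e by simp
qed

definition uj :: "'n \<Rightarrow> 'n mi" where "uj j = (\<lambda>j'. if j' = j then 1 else 0)"

lemma deg_uj: "deg (uj (j::'n::finite)) = 1"
  by (simp add: deg_def uj_def)

lemma ps_mult_x: "ps_mult (\<lambda>\<gamma>. if \<gamma> = uj j then 1 else 0) c \<alpha> = (if uj j \<le> \<alpha> then c (msub \<alpha> (uj j)) else 0)"
proof -
  have "ps_mult (\<lambda>\<gamma>. if \<gamma> = uj j then 1 else 0) c \<alpha> = (\<Sum>\<beta>\<in>{\<beta>. \<beta> \<le> \<alpha>}. if \<beta> = uj j then c (msub \<alpha> \<beta>) else 0)"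
    unfolding ps_mult_def by (rule sum.cong) auto
  also have "\<dots> = (if uj j \<le> \<alpha> then c (msub \<alpha> (uj j)) else 0)"
    by (simp add: finite_le)
  finally show ?thesis .
qed

lemma mS_char: "{P \<in> (S_set :: ('n::finite) dop set). const_map P = (\<lambda>_. 0)} = mS_set"
proof
  show "mS_set \<subseteq> {P \<in> (S_set :: 'n dop set). const_map P = (\<lambda>_. 0)}"
  proof
    fix Q :: "'n dop" assume "Q \<in> mS_set"
    then have "\<exists>(N::nat) f P. (\<forall>t<N. f t \<in> max_ideal \<and> P t \<in> S_set) \<and>
               Q = (\<lambda>k \<alpha>. \<Sum>t<N. op_mult (coeff_op (f t)) (P t) k \<alpha>)"
      unfolding mS_set_def mem_Collect_eq .
    then obtain N :: nat and f P where fPQ: "(\<forall>t<N. f t \<in> max_ideal \<and> P t \<in> S_set) \<and>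
               Q = (\<lambda>k \<alpha>. \<Sum>t<N. op_mult (coeff_op (f t)) (P t) k \<alpha>)"
      by (elim exE) (rule that)
    then have fP: "\<forall>t<N. f t \<in> max_ideal \<and> P t \<in> S_set"
      and Q: "Q = (\<lambda>k \<alpha>. \<Sum>t<N. op_mult (coeff_op (f t)) (P t) k \<alpha>)" by simp_all
    have Q2: "Q = (\<lambda>k \<alpha>. \<Sum>t<N. ps_mult (f t) (P t k) \<alpha>)" by (simp add: Q coeff_mult)
    have "\<forall>t. \<exists>C. t < N \<longrightarrow> bnd C (P t)" using fP S_iff by blast
    then obtain Cf where Cf: "\<And>t. t < N \<Longrightarrow> bnd (Cf t) (P t)" by metis
    have "bnd (\<Sum>t<N. Cf t) Q" unfolding bnd_def
    proof (intro allI impI)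
      fix k \<alpha> assume "Q k \<alpha> \<noteq> 0"
      then obtain t where t: "t < N" "ps_mult (f t) (P t k) \<alpha> \<noteq> 0"
        unfolding Q2 by (auto elim: sum.not_neutral_contains_not_neutral)
      then obtain \<beta> where "\<beta> \<le> \<alpha>" "P t k (msub \<alpha> \<beta>) \<noteq> 0" using ps_mult_nz by blast
      moreover have "msub \<alpha> \<beta> \<le> \<alpha>" by (auto simp: le_fun_def)
      ultimately have "deg k \<le> deg \<alpha> + Cf t" using Cf[OF t(1)] deg_mono unfolding bnd_def
        by (meson add_le_mono1 order.trans)
      moreover have "Cf t \<le> (\<Sum>t<N. Cf t)" using t(1) by (intro member_le_sum) auto
      ultimately show "deg k \<le> deg \<alpha> + (\<Sum>t<N. Cf t)" by linarith
    qed
    then have "Q \<in> S_set" using S_iff by blast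
    moreover have "const_map Q = (\<lambda>_. 0)"
      using fP by (simp add: Q2 const_map_def mi_zero_def ps_mult_at0 max_ideal_def)
    ultimately show "Q \<in> {P \<in> S_set. const_map P = (\<lambda>_. 0)}" by simp
  qed
next
  show "{P \<in> (S_set :: 'n dop set). const_map P = (\<lambda>_. 0)} \<subseteq> mS_set"
  proof
    fix P :: "'n dop" assume "P \<in> {P \<in> S_set. const_map P = (\<lambda>_. 0)}"
    then have PS: "P \<in> S_set" and P0: "\<And>k. P k (\<lambda>_. 0) = 0"
      by (auto simp: const_map_def mi_zero_def fun_eq_iff)
    obtain C where C: "bnd C P" using PS S_iff by blast
    define N where "N = card (UNIV :: 'n set)"
    obtain h where h: "bij_betw h {0..<N} (UNIV :: 'n set)"
      using ex_bij_betw_nat_finite[of "UNIV :: 'n set"] N_def by auto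
    define sel where "sel = (\<lambda>\<alpha>::'n mi. SOME j. 0 < \<alpha> j)"
    define xf where "xf = (\<lambda>j. (\<lambda>\<gamma>. if \<gamma> = uj j then 1 else 0) :: 'n ps)"
    define Qj where "Qj = (\<lambda>j. (\<lambda>k \<gamma>. if sel (madd \<gamma> (uj j)) = j then P k (madd \<gamma> (uj j)) else 0) :: 'n dop)"
    have xm: "xf j \<in> max_ideal" for j
      by (auto simp: xf_def max_ideal_def uj_def mi_zero_def fun_eq_iff)
    have QS: "Qj j \<in> S_set" for j
    proof -
      have "bnd (C+1) (Qj j)" unfolding bnd_def
      proof (intro allI impI)
        fix k \<gamma> assume "Qj j k \<gamma> \<noteq> 0"
        then have "P k (madd \<gamma> (uj j)) \<noteq> 0" by (auto simp: Qj_def split: if_splits)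
        then have "deg k \<le> deg (madd \<gamma> (uj j)) + C" using C unfolding bnd_def by blast
        then show "deg k \<le> deg \<gamma> + (C + 1)" by (simp add: deg_madd deg_uj)
      qed
      then show ?thesis using S_iff by blast
    qed
    have key: "P k \<alpha> = (\<Sum>j\<in>UNIV. ps_mult (xf j) (Qj j k) \<alpha>)" for k \<alpha>
    proof -
      have t: "ps_mult (xf j) (Qj j k) \<alpha> = (if 0 < \<alpha> j \<and> sel \<alpha> = j then P k \<alpha> else 0)" for j
      proof (cases "uj j \<le> \<alpha>")
        case True
        then have "madd (msub \<alpha> (uj j)) (uj j) = \<alpha>" using madd_msub_eq by blast
        moreover have "0 < \<alpha> j" using True by (auto simp: le_fun_def uj_def dest: spec[of _ j])
        ultimately show ?thesis unfolding xf_def ps_mult_x using True by (simp add: Qj_def)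
      next
        case False
        have "\<not> 0 < \<alpha> j"
        proof
          assume "0 < \<alpha> j"
          then have "uj j \<le> \<alpha>" by (auto simp: le_fun_def uj_def)
          then show False using False by simp
        qed
        then show ?thesis unfolding xf_def ps_mult_x using False by simp
      qed
      show ?thesis
      proof (cases "\<exists>j. 0 < \<alpha> j")
        case True
        then have s: "0 < \<alpha> (sel \<alpha>)" unfolding sel_def by (rule someI_ex)
        have "(\<Sum>j\<in>UNIV. ps_mult (xf j) (Qj j k) \<alpha>) = (\<Sum>j\<in>UNIV. if j = sel \<alpha> then P k \<alpha> else 0)"
          by (rule sum.cong) (auto simp: t s)
        then show ?thesis by simp
      next
        case False
        then have "(\<Sum>j\<in>UNIV. ps_mult (xf j) (Qj j k) \<alpha>) = 0" by (simp add: t)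
        moreover have "\<alpha> = (\<lambda>_. 0)" using False by auto
        ultimately show ?thesis using P0 by simp
      qed
    qed
    have "P = (\<lambda>k \<alpha>. \<Sum>t<N. op_mult (coeff_op (xf (h t))) (Qj (h t)) k \<alpha>)"
    proof (intro ext)
      fix k \<alpha>
      have "(\<Sum>t<N. op_mult (coeff_op (xf (h t))) (Qj (h t)) k \<alpha>) = (\<Sum>t\<in>{0..<N}. ps_mult (xf (h t)) (Qj (h t) k) \<alpha>)"
        by (simp add: coeff_mult atLeast0LessThan)
      also have "\<dots> = (\<Sum>j\<in>UNIV. ps_mult (xf j) (Qj j k) \<alpha>)"
        by (rule sum.reindex_bij_betw[OF h])
      finally show "P k \<alpha> = (\<Sum>t<N. op_mult (coeff_op (xf (h t))) (Qj (h t)) k \<alpha>)" using key by simp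
    qed
    then show "P \<in> mS_set" unfolding mS_set_def using xm QS
      by (intro CollectI exI[of _ N] exI[of _ "\<lambda>t. xf (h t)"] exI[of _ "\<lambda>t. Qj (h t)"]) auto
  qed
qed

lemma poly_char: "const_map ` (S_set :: ('n::finite) dop set) = poly_set"
proof
  show "const_map ` (S_set :: 'n dop set) \<subseteq> poly_set"
  proof
    fix c assume "c \<in> const_map ` (S_set :: 'n dop set)"
    then obtain P :: "'n dop" where P: "P \<in> S_set" "c = const_map P" by blast
    obtain C where C: "bnd C P" using P S_iff by blast
    have "{k. c k \<noteq> 0} \<subseteq> BB C"
    proof
      fix k assume "k \<in> {k. c k \<noteq> 0}"
      then have "P k mi_zero \<noteq> 0" by (simp add: P const_map_def)
      then have "deg k \<le> deg (mi_zero::'n mi) + C" using C unfolding bnd_def by blast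
      then show "k \<in> BB C" by simp
    qed
    then show "c \<in> poly_set" unfolding poly_set_def using finite_deg finite_subset by blast
  qed
  show "poly_set \<subseteq> const_map ` (S_set :: 'n dop set)"
  proof
    fix c :: "'n mi \<Rightarrow> complex" assume "c \<in> poly_set"
    then obtain C where C: "\<forall>k\<in>{k. c k \<noteq> 0}. deg k \<le> C"
      using bounded_finite_deg unfolding poly_set_def by blast
    define P :: "'n dop" where "P = (\<lambda>k \<alpha>. if \<alpha> = mi_zero then c k else 0)"
    have "bnd C P" using C by (auto simp: bnd_def P_def split: if_splits)
    then have "P \<in> S_set" using S_iff by blast
    moreover have "const_map P = c" by (simp add: const_map_def P_def)
    ultimately show "c \<in> const_map ` S_set" by blast
  qed
qed


theorem theorem5p3:
  shows "
   \<comment> \<open>(1) S is a C-algebra under termwise addition and the Leibniz product (well defined),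
        containing D as a subalgebra\<close>
   ((\<forall>P\<in>(S_set :: ('n::finite) dop set). \<forall>Q\<in>S_set. \<forall>m \<alpha>.
        finite {t. leib_term P Q m \<alpha> t \<noteq> 0}) \<and>
    ring (S_ring :: (complex, 'n dop) module) \<and>
    module CC (S_ring :: (complex, 'n dop) module) \<and>
    (\<forall>c P Q. P \<in> (S_set :: 'n dop set) \<longrightarrow> Q \<in> S_set \<longrightarrow>
        op_smult c (op_mult P Q) = op_mult (op_smult c P) Q \<and>
        op_smult c (op_mult P Q) = op_mult P (op_smult c Q)) \<and>
    (D_set :: 'n dop set) \<subseteq> S_set \<and>
    subring (D_set :: 'n dop set) (S_ring :: (complex, 'n dop) module) \<and>
    (\<forall>c P. P \<in> (D_set :: 'n dop set) \<longrightarrow> op_smult c P \<in> D_set)) \<and>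
   \<comment> \<open>(2) P |-> sum a_k(0) d^k induces a C-linear isomorphism S / mS -> C[d]\<close>
   ((\<forall>(P :: 'n dop) Q. const_map (op_add P Q) = (\<lambda>k. const_map P k + const_map Q k)) \<and>
    (\<forall>c (P :: 'n dop). const_map (op_smult c P) = (\<lambda>k. c * const_map P k)) \<and>
    const_map ` (S_set :: 'n dop set) = poly_set \<and>
    {P \<in> (S_set :: 'n dop set). const_map P = (\<lambda>_. 0)} = mS_set) \<and>
   \<comment> \<open>(3) injective algebra homomorphism S -> End^c(C[[x]]) extending the D-action\<close>
   ((\<forall>P\<in>(S_set :: 'n dop set). \<forall>b \<alpha>. finite {k. app_term P b \<alpha> k \<noteq> 0}) \<and>
    (\<forall>P\<in>(S_set :: 'n dop set). linear_endo (op_apply P) \<and> madic_continuous (op_apply P)) \<and>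
    inj_on op_apply (S_set :: 'n dop set) \<and>
    (\<forall>P\<in>(S_set :: 'n dop set). \<forall>Q\<in>S_set.
        op_apply (op_mult P Q) = op_apply P \<circ> op_apply Q \<and>
        op_apply (op_add P Q) = (\<lambda>b \<alpha>. op_apply P b \<alpha> + op_apply Q b \<alpha>)) \<and>
    (\<forall>c. \<forall>P\<in>(S_set :: 'n dop set). op_apply (op_smult c P) = (\<lambda>b \<alpha>. c * op_apply P b \<alpha>)) \<and>
    op_apply (op_one :: 'n dop) = id \<and>
    (\<forall>P\<in>(D_set :: 'n dop set). op_apply P = D_action P))"
proof -
  have p1: "\<forall>P\<in>(S_set :: 'n dop set). \<forall>Q\<in>S_set. \<forall>m \<alpha>. finite {t. leib_term P Q m \<alpha> t \<noteq> 0}"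
  proof (intro ballI allI)
    fix P Q :: "'n dop" and m \<alpha> assume "P \<in> S_set" "Q \<in> S_set"
    then obtain C1 C2 where "bnd C1 P" "bnd C2 Q" using S_iff by blast
    then show "finite {t. leib_term P Q m \<alpha> t \<noteq> 0}" by (rule leib_fin)
  qed
  have p2: "\<forall>c P Q. P \<in> (S_set :: 'n dop set) \<longrightarrow> Q \<in> S_set \<longrightarrow>
        op_smult c (op_mult P Q) = op_mult (op_smult c P) Q \<and>
        op_smult c (op_mult P Q) = op_mult P (op_smult c Q)"
    using smult_mult by blast
  have p3: "(D_set :: 'n dop set) \<subseteq> S_set" using D_sub_S by blast
  have p4: "\<forall>(P :: 'n dop) Q. const_map (op_add P Q) = (\<lambda>k. const_map P k + const_map Q k)"
    by (simp add: const_map_def op_add_def)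
  have p5: "\<forall>c (P :: 'n dop). const_map (op_smult c P) = (\<lambda>k. c * const_map P k)"
    by (simp add: const_map_def op_smult_def)
  have p6: "\<forall>P\<in>(S_set :: 'n dop set). \<forall>b \<alpha>. finite {k. app_term P b \<alpha> k \<noteq> 0}"
  proof (intro ballI allI)
    fix P :: "'n dop" and b \<alpha> assume "P \<in> S_set"
    then obtain C1 where "bnd C1 P" using S_iff by blast
    then show "finite {k. app_term P b \<alpha> k \<noteq> 0}" by (rule app_term_fin)
  qed
  have p7: "\<forall>P\<in>(S_set :: 'n dop set). linear_endo (op_apply P) \<and> madic_continuous (op_apply P)"
  proof (intro ballI)
    fix P :: "'n dop" assume "P \<in> S_set"
    then obtain C1 where "bnd C1 P" using S_iff by blast
    then show "linear_endo (op_apply P) \<and> madic_continuous (op_apply P)" using linear_P cont by blast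
  qed
  have p8: "inj_on op_apply (S_set :: 'n dop set)"
    by (rule inj_onI) (rule inj_S')
  have p9: "\<forall>P\<in>(S_set :: 'n dop set). \<forall>Q\<in>S_set.
        op_apply (op_mult P Q) = op_apply P \<circ> op_apply Q \<and>
        op_apply (op_add P Q) = (\<lambda>b \<alpha>. op_apply P b \<alpha> + op_apply Q b \<alpha>)"
    using hom_S add_S by blast
  have p10: "\<forall>c. \<forall>P\<in>(S_set :: 'n dop set). op_apply (op_smult c P) = (\<lambda>b \<alpha>. c * op_apply P b \<alpha>)"
    using smult_S by blast
  have p11: "\<forall>P\<in>(D_set :: 'n dop set). op_apply P = D_action P"
    using D_action_eq by blast
  show ?thesis
    using p1 ring_S module_S p2 p3 D_subring D_smult p4 p5 poly_char mS_char p6 p7 p8 p9 p10 app_one p11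
    by blast
qed

end
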